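(* Consider a state-dependent discrete memoryless channel $W_{Y,Z|X,S}$ with finite alphabets, i.i.d. state distribution $Q_S$, innocent symbol $x_0$, and causal channel state information available only at the transmitter (encoder $X_i=f_i(M,S^i)$, decoder $Y^n\mapsto\hat M$). Let $\mathcal D$ be the set of joint pmfs $P_{S,U,X,Y,Z}=Q_SP_U\mathbb 1_{\{X=x(U,S)\}}W_{Y,Z|X,S}$, where $U$ is an auxiliary random variable on a finite alphabet with $|\mathcal U|\le|\mathcal X|+1$ and $x:\mathcal U\times\mathcal S\to\mathcal X$ is deterministic, such that $P_Z=Q_0$ and $\mathbb I(U;Y)>\mathbb I(U;Z)$. Let $\mathcal S=\{R\ge0:\exists P\in\mathcal D\text{ with }R\le\mathbb I(U;Y)\}$. Then the covert capacity satisfies $C_{\mathrm{C\text{-}T}}\ge\max\{x:x\in\mathcal S\}$.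
   Context: Finite alphabets $\mathcal S,\mathcal X,\mathcal Y,\mathcal Z$. The channel has transition pmf $W_{Y,Z|X,S}$: input $X$, state $S$, output $Y$ at the legitimate receiver and output $Z$ at an adversary (warden). The state sequence $S^n$ is i.i.d. with pmf $Q_S$ and independent of the message; neither the legitimate receiver nor the warden knows the state. $x_0\in\mathcal X$ is a fixed innocent symbol, and $Q_0(z)=\sum_{s}Q_S(s)W_{Z|X,S}(z|x_0,s)$, assumed to have full support on $\mathcal Z$. A $(2^{nR},n)$ code consists of a message $M$ uniform on $\{1,\dots,2^{nR}\}$, an encoder and a decoder of the type specified. $P_{Z^n}$ denotes the distribution of the warden's output induced by the code. A rate $R$ is achievable if there is a sequence of $(2^{nR},n)$ codes with $\mathbb P(\hat M\ne M)\to 0$ and $\mathbb D(P_{Z^n}\|Q_0^{\otimes n})\to 0$ as $n\to\infty$; the covert capacity is the supremum of achievable rates. Mutual informations are computed under the indicated joint pmf. *)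

theory Defs
  imports "HOL-Probability.Probability"
begin

fun iid_list :: "'a pmf \<Rightarrow> nat \<Rightarrow> 'a list pmf" where
  "iid_list p 0 = return_pmf []"
| "iid_list p (Suc n) =
     bind_pmf p (\<lambda>x. bind_pmf (iid_list p n) (\<lambda>xs. return_pmf (x # xs)))"

fun prod_pmf_list :: "'a pmf list \<Rightarrow> 'a list pmf" where
  "prod_pmf_list [] = return_pmf []"
| "prod_pmf_list (p # ps) =
     bind_pmf p (\<lambda>x. bind_pmf (prod_pmf_list ps) (\<lambda>xs. return_pmf (x # xs)))"

definition kl_div :: "'a pmf \<Rightarrow> 'a pmf \<Rightarrow> real" where
  "kl_div P Q = (\<Sum>a\<in>set_pmf P. pmf P a * log 2 (pmf P a / pmf Q a))"

definition mut_inf :: "('a \<times> 'b) pmf \<Rightarrow> real" where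
  "mut_inf J = (\<Sum>ab\<in>set_pmf J.
      pmf J ab * log 2 (pmf J ab / (pmf (map_pmf fst J) (fst ab) * pmf (map_pmf snd J) (snd ab))))"

(* warden's output distribution under the innocent symbol *)
definition Q0 :: "'s pmf \<Rightarrow> ('x \<Rightarrow> 's \<Rightarrow> ('y \<times> 'z) pmf) \<Rightarrow> 'x \<Rightarrow> 'z pmf" where
  "Q0 QS W x0 = bind_pmf QS (\<lambda>s. map_pmf snd (W x0 s))"

definition num_msgs :: "nat \<Rightarrow> real \<Rightarrow> nat" where
  "num_msgs n R = nat \<lceil>2 powr (real n * R)\<rceil>"

(* Joint distribution (M, S^n, Y^n, Z^n) induced by a code with causal CSI at the
   transmitter: encoder f i m (S_1..S_{i+1}) gives the (i+1)-th input (0-based index i). *)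
definition code_exp ::
  "'s pmf \<Rightarrow> ('x \<Rightarrow> 's \<Rightarrow> ('y \<times> 'z) pmf) \<Rightarrow> nat \<Rightarrow> nat \<Rightarrow>
   (nat \<Rightarrow> nat \<Rightarrow> 's list \<Rightarrow> 'x) \<Rightarrow> (nat \<times> 's list \<times> 'y list \<times> 'z list) pmf" where
  "code_exp QS W n N f =
     bind_pmf (pmf_of_set {0..<N}) (\<lambda>m.
     bind_pmf (iid_list QS n) (\<lambda>ss.
     bind_pmf (prod_pmf_list (map (\<lambda>i. W (f i m (take (Suc i) ss)) (ss ! i)) [0..<n])) (\<lambda>yz.
     return_pmf (m, ss, map fst yz, map snd yz))))"

definition err_prob ::
  "'s pmf \<Rightarrow> ('x \<Rightarrow> 's \<Rightarrow> ('y \<times> 'z) pmf) \<Rightarrow> nat \<Rightarrow> nat \<Rightarrow>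
   (nat \<Rightarrow> nat \<Rightarrow> 's list \<Rightarrow> 'x) \<Rightarrow> ('y list \<Rightarrow> nat) \<Rightarrow> real" where
  "err_prob QS W n N f g =
     measure_pmf.prob (code_exp QS W n N f) {(m, ss, ys, zs). g ys \<noteq> m}"

definition warden_dist ::
  "'s pmf \<Rightarrow> ('x \<Rightarrow> 's \<Rightarrow> ('y \<times> 'z) pmf) \<Rightarrow> nat \<Rightarrow> nat \<Rightarrow>
   (nat \<Rightarrow> nat \<Rightarrow> 's list \<Rightarrow> 'x) \<Rightarrow> 'z list pmf" where
  "warden_dist QS W n N f = map_pmf (\<lambda>(m, ss, ys, zs). zs) (code_exp QS W n N f)"

definition covert_achievable ::
  "'s pmf \<Rightarrow> ('x \<Rightarrow> 's \<Rightarrow> ('y \<times> 'z) pmf) \<Rightarrow> 'x \<Rightarrow> real \<Rightarrow> bool" where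
  "covert_achievable QS W x0 R \<longleftrightarrow>
     (\<exists>(f :: nat \<Rightarrow> nat \<Rightarrow> nat \<Rightarrow> 's list \<Rightarrow> 'x) (g :: nat \<Rightarrow> 'y list \<Rightarrow> nat).
        (\<lambda>n. err_prob QS W n (num_msgs n R) (f n) (g n)) \<longlonglongrightarrow> 0 \<and>
        (\<lambda>n. kl_div (warden_dist QS W n (num_msgs n R) (f n)) (iid_list (Q0 QS W x0) n))
           \<longlonglongrightarrow> 0)"

definition covert_capacity ::
  "'s pmf \<Rightarrow> ('x \<Rightarrow> 's \<Rightarrow> ('y \<times> 'z) pmf) \<Rightarrow> 'x \<Rightarrow> real" where
  "covert_capacity QS W x0 = Sup {R. covert_achievable QS W x0 R}"

definition aux_joint ::
  "'s pmf \<Rightarrow> ('x \<Rightarrow> 's \<Rightarrow> ('y \<times> 'z) pmf) \<Rightarrow> nat pmf \<Rightarrow> (nat \<Rightarrow> 's \<Rightarrow> 'x) \<Rightarrow>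
   ('s \<times> nat \<times> 'x \<times> 'y \<times> 'z) pmf" where
  "aux_joint QS W PU xf =
     bind_pmf QS (\<lambda>s. bind_pmf PU (\<lambda>u. bind_pmf (W (xf u s) s) (\<lambda>yz.
       return_pmf (s, u, xf u s, fst yz, snd yz))))"

(* the set \<D>: |U| \<le> |X|+1 is rendered as U taking values in {0..<|X|+1} *)
definition D_set ::
  "'s pmf \<Rightarrow> ('x::finite \<Rightarrow> 's \<Rightarrow> ('y \<times> 'z) pmf) \<Rightarrow> 'x \<Rightarrow>
   ('s \<times> nat \<times> 'x \<times> 'y \<times> 'z) pmf set" where
  "D_set QS W x0 = {P. \<exists>PU xf. set_pmf PU \<subseteq> {0..<CARD('x) + 1} \<and>
       P = aux_joint QS W PU xf \<and>
       map_pmf (\<lambda>(s, u, x, y, z). z) P = Q0 QS W x0 \<and>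
       mut_inf (map_pmf (\<lambda>(s, u, x, y, z). (u, y)) P) >
       mut_inf (map_pmf (\<lambda>(s, u, x, y, z). (u, z)) P)}"

definition rate_set ::
  "'s pmf \<Rightarrow> ('x::finite \<Rightarrow> 's \<Rightarrow> ('y \<times> 'z) pmf) \<Rightarrow> 'x \<Rightarrow> real set" where
  "rate_set QS W x0 = {R. R \<ge> 0 \<and> (\<exists>P \<in> D_set QS W x0.
       R \<le> mut_inf (map_pmf (\<lambda>(s, u, x, y, z). (u, y)) P))}"

end

theory Submission
  imports Defs
begin

lemma iid_as_prod: "iid_list p n = prod_pmf_list (replicate n p)"
  by (induction n) auto

lemma set_prod_pmf_list: "set_pmf (prod_pmf_list ps) = {xs. list_all2 (\<lambda>p x. x \<in> set_pmf p) ps xs}"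
proof (induction ps)
  case Nil then show ?case by auto
next
  case (Cons p ps)
  show ?case by (auto simp: Cons list_all2_Cons1)
qed

lemma finite_set_prod_pmf_list:
  assumes "\<And>p. p \<in> set ps \<Longrightarrow> finite (set_pmf p)"
  shows "finite (set_pmf (prod_pmf_list ps))"
  using assms
proof (induction ps)
  case Nil then show ?case by auto
next
  case (Cons p ps)
  have "set_pmf (prod_pmf_list (p # ps)) = (\<lambda>(x,xs). x # xs) ` (set_pmf p \<times> set_pmf (prod_pmf_list ps))"
    by (auto simp: image_iff)
  then show ?case using Cons by simp
qed

lemma length_prod_pmf_list: "xs \<in> set_pmf (prod_pmf_list ps) \<Longrightarrow> length xs = length ps"
  by (auto simp: set_prod_pmf_list dest: list_all2_lengthD)

lemma map_prod_pmf_list: "map_pmf (map h) (prod_pmf_list ps) = prod_pmf_list (map (map_pmf h) ps)"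
proof (induction ps)
  case Nil then show ?case by auto
next
  case (Cons p ps)
  have "map_pmf (map h) (prod_pmf_list (p # ps)) =
    bind_pmf p (\<lambda>x. bind_pmf (map_pmf (map h) (prod_pmf_list ps)) (\<lambda>xs. return_pmf (h x # xs)))"
    by (simp add: map_pmf_def bind_assoc_pmf bind_return_pmf)
  also have "\<dots> = prod_pmf_list (map (map_pmf h) (p # ps))"
    by (simp only: list.map prod_pmf_list.simps Cons.IH[symmetric]) (simp add: map_pmf_def bind_assoc_pmf bind_return_pmf)
  finally show ?case .
qed

lemma E_bind:
  fixes h :: "'b \<Rightarrow> real"
  assumes "finite (set_pmf p)" "\<And>x. x \<in> set_pmf p \<Longrightarrow> finite (set_pmf (f x))"
  shows "measure_pmf.expectation (bind_pmf p f) h = measure_pmf.expectation p (\<lambda>x. measure_pmf.expectation (f x) h)"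
  using assms by (subst pmf_expectation_bind[of "set_pmf p"]) (auto simp: integral_measure_pmf[of "set_pmf p"])

definition unz :: "('a \<times> 'b) list \<Rightarrow> 'a list \<times> 'b list" where
  "unz l = (map fst l, map snd l)"

lemma joint_prod:
  "bind_pmf (prod_pmf_list Ps) (\<lambda>us. map_pmf (Pair us) (prod_pmf_list (map K us))) =
   map_pmf unz (prod_pmf_list (map (\<lambda>P. bind_pmf P (\<lambda>u. map_pmf (Pair u) (K u))) Ps))"
proof (induction Ps)
  case Nil then show ?case by (simp add: unz_def bind_return_pmf)
next
  case (Cons P Ps)
  let ?R = "prod_pmf_list (map (\<lambda>P. bind_pmf P (\<lambda>u. map_pmf (Pair u) (K u))) Ps)"
  have "map_pmf unz (prod_pmf_list (map (\<lambda>P. bind_pmf P (\<lambda>u. map_pmf (Pair u) (K u))) (P # Ps)))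
     = bind_pmf P (\<lambda>u. bind_pmf (K u) (\<lambda>y. bind_pmf (map_pmf unz ?R) (\<lambda>(xs,ys). return_pmf (u#xs, y#ys))))"
    by (simp add: map_pmf_def bind_assoc_pmf bind_return_pmf unz_def)
  also have "\<dots> = bind_pmf P (\<lambda>u. bind_pmf (K u) (\<lambda>y. bind_pmf (prod_pmf_list Ps) (\<lambda>xs.
       bind_pmf (prod_pmf_list (map K xs)) (\<lambda>ys. return_pmf (u#xs, y#ys)))))"
    by (simp only: Cons.IH[symmetric]) (simp add: map_pmf_def bind_assoc_pmf bind_return_pmf)
  also have "\<dots> = bind_pmf P (\<lambda>u. bind_pmf (prod_pmf_list Ps) (\<lambda>xs. bind_pmf (K u) (\<lambda>y.
       bind_pmf (prod_pmf_list (map K xs)) (\<lambda>ys. return_pmf (u#xs, y#ys)))))"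
    by (subst bind_commute_pmf) (rule refl)
  also have "\<dots> = bind_pmf (prod_pmf_list (P # Ps)) (\<lambda>us. map_pmf (Pair us) (prod_pmf_list (map K us)))"
    by (simp add: map_pmf_def bind_assoc_pmf bind_return_pmf)
  finally show ?case by simp
qed

lemma marg_prod:
  "bind_pmf (prod_pmf_list Ps) (\<lambda>us. prod_pmf_list (map K us)) =
   prod_pmf_list (map (\<lambda>P. bind_pmf P K) Ps)"
proof -
  have "bind_pmf (prod_pmf_list Ps) (\<lambda>us. prod_pmf_list (map K us)) =
    map_pmf snd (bind_pmf (prod_pmf_list Ps) (\<lambda>us. map_pmf (Pair us) (prod_pmf_list (map K us))))"
    by (simp add: map_bind_pmf pmf.map_comp o_def)
  also have "\<dots> = map_pmf (map snd) (prod_pmf_list (map (\<lambda>P. bind_pmf P (\<lambda>u. map_pmf (Pair u) (K u))) Ps))"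
    by (simp add: joint_prod pmf.map_comp o_def unz_def)
  also have "\<dots> = prod_pmf_list (map (\<lambda>P. bind_pmf P K) Ps)"
    by (simp add: map_prod_pmf_list o_def map_bind_pmf pmf.map_comp)
  finally show ?thesis .
qed

lemma pair_prod:
  "length Ps = length Qs \<Longrightarrow> pair_pmf (prod_pmf_list Ps) (prod_pmf_list Qs) =
   map_pmf unz (prod_pmf_list (map2 pair_pmf Ps Qs))"
proof (induction Ps Qs rule: list_induct2)
  case Nil then show ?case by (simp add: unz_def pair_return_pmf1)
next
  case (Cons P Ps Q Qs)
  have "map_pmf unz (prod_pmf_list (map2 pair_pmf (P#Ps) (Q#Qs))) =
     bind_pmf P (\<lambda>x. bind_pmf Q (\<lambda>y. bind_pmf (map_pmf unz (prod_pmf_list (map2 pair_pmf Ps Qs))) (\<lambda>(xs,ys). return_pmf (x#xs, y#ys))))"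
    by (simp add: map_pmf_def bind_assoc_pmf bind_return_pmf unz_def pair_pmf_def)
  also have "\<dots> = bind_pmf P (\<lambda>x. bind_pmf Q (\<lambda>y. bind_pmf (prod_pmf_list Ps) (\<lambda>xs. bind_pmf (prod_pmf_list Qs) (\<lambda>ys. return_pmf (x#xs, y#ys)))))"
    by (simp only: Cons.IH[symmetric]) (simp add: pair_pmf_def bind_assoc_pmf bind_return_pmf)
  also have "\<dots> = bind_pmf P (\<lambda>x. bind_pmf (prod_pmf_list Ps) (\<lambda>xs. bind_pmf Q (\<lambda>y. bind_pmf (prod_pmf_list Qs) (\<lambda>ys. return_pmf (x#xs, y#ys)))))"
    by (subst bind_commute_pmf) (rule refl)
  also have "\<dots> = pair_pmf (prod_pmf_list (P#Ps)) (prod_pmf_list (Q#Qs))"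
    by (simp add: pair_pmf_def bind_assoc_pmf bind_return_pmf)
  finally show ?case by simp
qed

lemma E_prod_list:
  fixes g :: "'a \<Rightarrow> real"
  assumes "\<And>p. p \<in> set ps \<Longrightarrow> finite (set_pmf p)"
  shows "measure_pmf.expectation (prod_pmf_list ps) (\<lambda>l. prod_list (map g l)) =
    (\<Prod>p\<leftarrow>ps. measure_pmf.expectation p g)"
  using assms
proof (induction ps)
  case Nil then show ?case by simp
next
  case (Cons p ps)
  have f: "finite (set_pmf (prod_pmf_list ps))" using Cons by (intro finite_set_prod_pmf_list) auto
  have "measure_pmf.expectation (prod_pmf_list (p # ps)) (\<lambda>l. prod_list (map g l)) =
    measure_pmf.expectation p (\<lambda>x. measure_pmf.expectation (prod_pmf_list ps) (\<lambda>xs. g x * prod_list (map g xs)))"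
    using Cons f by (simp add: E_bind)
  also have "\<dots> = measure_pmf.expectation p (\<lambda>x. g x * measure_pmf.expectation (prod_pmf_list ps) (\<lambda>xs. prod_list (map g xs)))"
    by simp
  also have "\<dots> = measure_pmf.expectation p g * (\<Prod>p\<leftarrow>ps. measure_pmf.expectation p g)"
    using Cons by simp
  finally show ?case by simp
qed



lemma state_marg:
  "length us = n \<Longrightarrow> bind_pmf (iid_list QS n) (\<lambda>ss. prod_pmf_list (map2 F us ss)) =
    prod_pmf_list (map (\<lambda>u. bind_pmf QS (F u)) us)"
proof (induction us arbitrary: n)
  case Nil then show ?case by (simp add: bind_return_pmf)
next
  case (Cons u us)
  then obtain n' where n: "n = Suc n'" "length us = n'" by (cases n) auto
  have "bind_pmf (iid_list QS n) (\<lambda>ss. prod_pmf_list (map2 F (u#us) ss)) =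
     bind_pmf QS (\<lambda>s. bind_pmf (F u s) (\<lambda>y. bind_pmf (bind_pmf (iid_list QS n') (\<lambda>ss. prod_pmf_list (map2 F us ss))) (\<lambda>ys. return_pmf (y#ys))))"
    unfolding n by (simp add: bind_assoc_pmf bind_return_pmf) (subst bind_commute_pmf, rule refl)
  also have "\<dots> = prod_pmf_list (map (\<lambda>u. bind_pmf QS (F u)) (u#us))"
    using Cons n by (simp add: bind_assoc_pmf)
  finally show ?case .
qed

definition Vch :: "'s pmf \<Rightarrow> ('x \<Rightarrow> 's \<Rightarrow> ('y \<times> 'z) pmf) \<Rightarrow> (nat \<Rightarrow> 's \<Rightarrow> 'x) \<Rightarrow> nat \<Rightarrow> ('y \<times> 'z) pmf" where
  "Vch QS W xf u = bind_pmf QS (\<lambda>s. W (xf u s) s)"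

definition enc :: "(nat \<Rightarrow> 's \<Rightarrow> 'x) \<Rightarrow> (nat \<Rightarrow> nat list) \<Rightarrow> nat \<Rightarrow> nat \<Rightarrow> 's list \<Rightarrow> 'x" where
  "enc xf cb i m ss = xf (cb m ! i) (ss ! i)"

lemma set_iid: "ss \<in> set_pmf (iid_list QS n) \<Longrightarrow> length ss = n"
  by (simp add: iid_as_prod length_prod_pmf_list)

lemma map_idx: "length ss = n \<Longrightarrow> length us = n \<Longrightarrow>
  map (\<lambda>i. W (xf (us!i) (ss ! i)) (ss ! i)) [0..<n] = map2 (\<lambda>u s. W (xf u s) s) us ss"
  by (rule nth_equalityI) auto

lemma code_red:
  assumes N: "N > 0" and len: "\<And>m. m < N \<Longrightarrow> length (cb m) = n"
  shows "map_pmf (\<lambda>(m,ss,ys,zs). (m,ys,zs)) (code_exp QS W n N (enc xf cb)) =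
    bind_pmf (pmf_of_set {0..<N}) (\<lambda>m. map_pmf (\<lambda>yz. (m, map fst yz, map snd yz)) (prod_pmf_list (map (Vch QS W xf) (cb m))))"
  unfolding code_exp_def
proof (subst map_bind_pmf, rule bind_pmf_cong[OF refl])
  fix m assume "m \<in> set_pmf (pmf_of_set {0..<N})"
  then have m: "m < N" using N by auto
  have "map_pmf (\<lambda>(m, ss, ys, zs). (m, ys, zs)) (bind_pmf (iid_list QS n) (\<lambda>ss.
          bind_pmf (prod_pmf_list (map (\<lambda>i. W (enc xf cb i m (take (Suc i) ss)) (ss ! i)) [0..<n]))
           (\<lambda>yz. return_pmf (m, ss, map fst yz, map snd yz))))
      = map_pmf (\<lambda>yz. (m, map fst yz, map snd yz)) (bind_pmf (iid_list QS n) (\<lambda>ss.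
          prod_pmf_list (map2 (\<lambda>u s. W (xf u s) s) (cb m) ss)))"
    unfolding map_bind_pmf
    apply (rule bind_pmf_cong[OF refl])
    apply (frule set_iid)
    apply (simp add: enc_def map_idx len[OF m] map_pmf_def bind_assoc_pmf bind_return_pmf)
    done
  also have "\<dots> = map_pmf (\<lambda>yz. (m, map fst yz, map snd yz)) (prod_pmf_list (map (Vch QS W xf) (cb m)))"
    by (subst state_marg[OF len[OF m]]) (simp add: Vch_def[abs_def])
  finally show "map_pmf (\<lambda>(m, ss, ys, zs). (m, ys, zs)) (bind_pmf (iid_list QS n) (\<lambda>ss.
          bind_pmf (prod_pmf_list (map (\<lambda>i. W (enc xf cb i m (take (Suc i) ss)) (ss ! i)) [0..<n]))
           (\<lambda>yz. return_pmf (m, ss, map fst yz, map snd yz)))) =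
    map_pmf (\<lambda>yz. (m, map fst yz, map snd yz)) (prod_pmf_list (map (Vch QS W xf) (cb m)))" .
qed



lemma chern_up:
  fixes p \<rho> :: "'a \<Rightarrow> real"
  assumes fin: "finite A" and p1: "sum p A = 1" and pos: "\<And>a. a \<in> A \<Longrightarrow> \<rho> a > 0"
    and lt: "(\<Sum>a\<in>A. p a * log 2 (\<rho> a)) < r"
  shows "\<exists>t>0. t \<le> 1 \<and> (\<Sum>a\<in>A. p a * \<rho> a powr t) < 2 powr (t * r)"
proof -
  define \<phi> where "\<phi> t = (\<Sum>a\<in>A. p a * exp (t * ln (\<rho> a))) - exp (t * (r * ln 2))" for t
  have d: "DERIV \<phi> 0 :> (\<Sum>a\<in>A. p a * ln (\<rho> a)) - r * ln 2"
    unfolding \<phi>_def by (auto intro!: derivative_eq_intros simp: mult.commute)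
  have "(\<Sum>a\<in>A. p a * ln (\<rho> a)) = ln 2 * (\<Sum>a\<in>A. p a * log 2 (\<rho> a))"
    by (simp add: log_def sum_distrib_left field_simps)
  also have "\<dots> < ln 2 * r" using lt by simp
  finally have neg: "(\<Sum>a\<in>A. p a * ln (\<rho> a)) - r * ln 2 < 0" by (simp add: mult.commute)
  obtain d where d0: "d > 0" and dd: "\<And>h. h > 0 \<Longrightarrow> h < d \<Longrightarrow> \<phi> 0 > \<phi> (0 + h)"
    using DERIV_neg_dec_right[OF d neg] by blast
  define t where "t = min (d/2) 1"
  have t: "t > 0" "t < d" "t \<le> 1" using d0 by (auto simp: t_def)
  have "\<phi> 0 = 0" using p1 by (simp add: \<phi>_def)
  then have "\<phi> t < 0" using dd[of t] t by simp
  moreover have "(\<Sum>a\<in>A. p a * \<rho> a powr t) = (\<Sum>a\<in>A. p a * exp (t * ln (\<rho> a)))"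
  proof (intro sum.cong refl)
    fix a assume "a \<in> A" then have "\<rho> a > 0" by (rule pos)
    then show "p a * \<rho> a powr t = p a * exp (t * ln (\<rho> a))" by (simp add: powr_def mult.commute)
  qed
  moreover have "2 powr (t * r) = exp (t * (r * ln 2))" by (simp add: powr_def mult_ac)
  ultimately show ?thesis using t unfolding \<phi>_def by auto
qed

lemma chern_down:
  fixes p \<rho> :: "'a \<Rightarrow> real"
  assumes fin: "finite A" and p1: "sum p A = 1" and pos: "\<And>a. a \<in> A \<Longrightarrow> \<rho> a > 0"
    and lt: "r < (\<Sum>a\<in>A. p a * log 2 (\<rho> a))"
  shows "\<exists>t>0. (\<Sum>a\<in>A. p a * \<rho> a powr (-t)) < 2 powr (-t * r)"
proof -
  have "(\<Sum>a\<in>A. p a * log 2 (1 / \<rho> a)) = - (\<Sum>a\<in>A. p a * log 2 (\<rho> a))"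
  proof -
    have "p a * log 2 (1 / \<rho> a) = - (p a * log 2 (\<rho> a))" if "a \<in> A" for a
      using pos[OF that] by (simp add: log_divide)
    then show ?thesis by (simp add: sum_negf[symmetric])
  qed
  with lt have "(\<Sum>a\<in>A. p a * log 2 (1 / \<rho> a)) < -r" by simp
  from chern_up[OF fin p1 _ this] pos obtain t where t: "t > 0"
    "(\<Sum>a\<in>A. p a * (1 / \<rho> a) powr t) < 2 powr (t * - r)" by force
  have "(\<Sum>a\<in>A. p a * (1 / \<rho> a) powr t) = (\<Sum>a\<in>A. p a * \<rho> a powr (-t))"
  proof (intro sum.cong refl)
    fix a assume "a \<in> A" then have "\<rho> a > 0" by (rule pos)
    then show "p a * (1 / \<rho> a) powr t = p a * \<rho> a powr (-t)" by (simp add: powr_divide powr_minus_divide)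
  qed
  with t show ?thesis by (intro exI[of _ t]) auto
qed

lemma E_sum:
  fixes f :: "'a \<Rightarrow> real"
  assumes "finite (set_pmf M)"
  shows "measure_pmf.expectation M f = (\<Sum>a\<in>set_pmf M. pmf M a * f a)"
  using assms by (subst integral_measure_pmf_real[of "set_pmf M"]) (auto simp: mult.commute)

lemma markov:
  fixes f :: "'a \<Rightarrow> real"
  assumes fin: "finite (set_pmf M)" and ge: "\<And>x. x \<in> set_pmf M \<Longrightarrow> x \<in> S \<Longrightarrow> 1 \<le> f x"
    and nn: "\<And>x. x \<in> set_pmf M \<Longrightarrow> 0 \<le> f x"
  shows "measure_pmf.prob M S \<le> measure_pmf.expectation M f"
proof -
  have "measure_pmf.prob M S = measure_pmf.prob M (S \<inter> set_pmf M)" by (simp add: measure_Int_set_pmf)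
  also have "\<dots> = (\<Sum>a\<in>S \<inter> set_pmf M. pmf M a)" using fin by (simp add: measure_measure_pmf_finite)
  also have "\<dots> \<le> (\<Sum>a\<in>S \<inter> set_pmf M. pmf M a * f a)"
    using ge by (intro sum_mono) (metis IntD1 IntD2 mult.right_neutral mult_left_mono pmf_nonneg)
  also have "\<dots> \<le> (\<Sum>a\<in>set_pmf M. pmf M a * f a)"
    using fin nn by (intro sum_mono2) auto
  finally show ?thesis using E_sum[OF fin] by simp
qed

lemma exists_le_E:
  fixes f :: "'a \<Rightarrow> real"
  assumes fin: "finite (set_pmf M)"
  shows "\<exists>x\<in>set_pmf M. f x \<le> measure_pmf.expectation M f"
proof (rule ccontr)
  assume "\<not> ?thesis"
  then have lt: "\<And>x. x \<in> set_pmf M \<Longrightarrow> measure_pmf.expectation M f < f x" by force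
  have "measure_pmf.expectation M f = (\<Sum>a\<in>set_pmf M. pmf M a * measure_pmf.expectation M f)"
    using fin by (simp add: sum_distrib_right[symmetric] sum_pmf_eq_1)
  also have "\<dots> < (\<Sum>a\<in>set_pmf M. pmf M a * f a)"
    using fin set_pmf_not_empty[of M] lt
    by (intro sum_strict_mono) (auto intro!: mult_strict_left_mono simp: pmf_positive)
  finally show False using E_sum[OF fin, of f] by simp
qed

lemma jensen_log:
  fixes X :: "'a \<Rightarrow> real"
  assumes fin: "finite (set_pmf M)" and pos: "\<And>x. x \<in> set_pmf M \<Longrightarrow> X x > 0"
  shows "measure_pmf.expectation M (\<lambda>x. log 2 (X x)) \<le> log 2 (measure_pmf.expectation M X)"
proof -
  let ?S = "set_pmf M"
  define \<mu> where "\<mu> = measure_pmf.expectation M X"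
  have s1: "(\<Sum>a\<in>?S. pmf M a) = 1" using fin by (simp add: sum_pmf_eq_1)
  have \<mu>: "\<mu> = (\<Sum>a\<in>?S. pmf M a * X a)" using E_sum[OF fin] by (simp add: \<mu>_def)
  have "\<mu> > 0" unfolding \<mu> using fin set_pmf_not_empty[of M] pos
    by (intro sum_pos) (auto simp: pmf_positive)
  have "measure_pmf.expectation M (\<lambda>x. log 2 (X x)) - log 2 \<mu> = (\<Sum>a\<in>?S. pmf M a * log 2 (X a / \<mu>))"
  proof -
    have "pmf M a * log 2 (X a / \<mu>) = pmf M a * log 2 (X a) - pmf M a * log 2 \<mu>" if "a \<in> ?S" for a
      using pos[OF that] \<open>\<mu> > 0\<close> by (simp add: log_divide right_diff_distrib)
    then show ?thesis using E_sum[OF fin] s1 by (simp add: sum_subtractf sum_distrib_right[symmetric])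
  qed
  also have "\<dots> \<le> (\<Sum>a\<in>?S. pmf M a * ((X a / \<mu> - 1) / ln 2))"
  proof (intro sum_mono mult_left_mono)
    fix a assume "a \<in> ?S"
    then have "X a / \<mu> > 0" using pos \<open>\<mu> > 0\<close> by auto
    then have "ln (X a / \<mu>) \<le> X a / \<mu> - 1" by (rule ln_le_minus_one)
    then show "log 2 (X a / \<mu>) \<le> (X a / \<mu> - 1) / ln 2" by (simp add: log_def divide_right_mono)
  qed auto
  also have "\<dots> = ((\<Sum>a\<in>?S. pmf M a * X a) / \<mu> - (\<Sum>a\<in>?S. pmf M a)) / ln 2"
    by (simp add: sum_divide_distrib[symmetric] right_diff_distrib sum_subtractf sum_distrib_left[symmetric] field_simps)
  also have "\<dots> = 0" using \<mu> \<open>\<mu> > 0\<close> s1 by simp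
  finally show ?thesis by (simp add: \<mu>_def)
qed

lemma log1p_bound:
  fixes a t :: real
  assumes a: "a \<ge> 0" and t: "0 < t" "t \<le> 1"
  shows "log 2 (1 + a) \<le> a powr t / (t * ln 2)"
proof -
  have "ln (1 + a) \<le> a powr t / t"
  proof (cases "a \<le> 1")
    case True
    have "ln (1 + a) \<le> a" using a by (intro ln_add_one_self_le_self) 
    also have "a \<le> a powr t"
    proof (cases "a = 0")
      case False
      then show ?thesis using True a t powr_mono'[of t 1 a] by simp
    qed simp
    also have "\<dots> \<le> a powr t / t" using t by (simp add: le_divide_eq mult_left_le)
    finally show ?thesis .
  next
    case False
    then have a1: "a > 1" by simp
    have "ln (1 + a) \<le> ln (2 * a)" using a1 by simp
    also have "\<dots> = ln 2 + ln a" using a1 by (simp add: ln_mult)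
    also have "t * ln a = ln (a powr t)" using a1 by (simp add: ln_powr)
    then have "t * ln a \<le> a powr t - 1" using a1 by (metis ln_le_minus_one ln_powr powr_gt_zero not_one_less_zero)
    then have "ln a \<le> (a powr t - 1) / t" using t by (simp add: le_divide_eq mult.commute)
    then have "ln 2 + ln a \<le> ln 2 + (a powr t - 1) / t" by simp
    also have "\<dots> \<le> a powr t / t"
    proof -
      have "ln 2 \<le> 1 / t" using t ln_2_less_1 by (smt (verit) le_divide_eq_1)
      then show ?thesis by (simp add: diff_divide_distrib)
    qed
    finally show ?thesis .
  qed
  then show ?thesis by (simp add: log_def divide_right_mono field_simps)
qed



definition rho :: "('a \<times> 'b) pmf \<Rightarrow> 'a \<times> 'b \<Rightarrow> real" where
  "rho J ab = pmf J ab / (pmf (map_pmf fst J) (fst ab) * pmf (map_pmf snd J) (snd ab))"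

definition rhon :: "('a \<times> 'b) pmf \<Rightarrow> ('a \<times> 'b) list \<Rightarrow> real" where
  "rhon J l = prod_list (map (rho J) l)"

definition hh :: "('a \<times> 'b) pmf \<Rightarrow> real \<Rightarrow> real" where
  "hh J t = measure_pmf.expectation J (\<lambda>ab. rho J ab powr t)"

lemma rho_nn: "rho J ab \<ge> 0"
  by (simp add: rho_def)

lemma rho_pos: "ab \<in> set_pmf J \<Longrightarrow> rho J ab > 0"
proof -
  assume a: "ab \<in> set_pmf J"
  then have "fst ab \<in> set_pmf (map_pmf fst J)" "snd ab \<in> set_pmf (map_pmf snd J)" by auto
  then show ?thesis using a by (simp add: rho_def pmf_positive)
qed

lemma rhon_nn: "rhon J l \<ge> 0"
  unfolding rhon_def by (induction l) (auto simp: rho_nn)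

lemma rhon_pos: "set l \<subseteq> set_pmf J \<Longrightarrow> rhon J l > 0"
  unfolding rhon_def by (induction l) (auto simp: rho_pos)

lemma prod_list_powr:
  assumes "\<And>a. f a \<ge> 0"
  shows "prod_list (map (\<lambda>a. f a powr t) l) = prod_list (map f l) powr (t::real)"
proof (induction l)
  case Nil then show ?case by simp
next
  case (Cons a l)
  have "prod_list (map f l) \<ge> 0" using assms by (induction l) auto
  then show ?case using Cons assms by (simp add: powr_mult)
qed

lemma set_iid_sub: "l \<in> set_pmf (iid_list p n) \<Longrightarrow> set l \<subseteq> set_pmf p \<and> length l = n"
proof -
  assume "l \<in> set_pmf (iid_list p n)"
  then have "list_all2 (\<lambda>p x. x \<in> set_pmf p) (replicate n p) l"
    by (simp add: iid_as_prod set_prod_pmf_list)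
  then show ?thesis
    by (auto simp: list_all2_conv_all_nth in_set_conv_nth)
qed

lemma finite_iid: "finite (set_pmf p) \<Longrightarrow> finite (set_pmf (iid_list p n))"
  unfolding iid_as_prod by (rule finite_set_prod_pmf_list) auto

lemma E_iid_prod:
  fixes g :: "'a \<Rightarrow> real"
  assumes "finite (set_pmf p)"
  shows "measure_pmf.expectation (iid_list p n) (\<lambda>l. prod_list (map g l)) = measure_pmf.expectation p g ^ n"
  unfolding iid_as_prod using assms by (subst E_prod_list) (auto simp: prod_list_replicate)

lemma mut_inf_rho: "mut_inf J = (\<Sum>ab\<in>set_pmf J. pmf J ab * log 2 (rho J ab))"
  by (simp add: mut_inf_def rho_def)

lemma hh_sum: "finite (set_pmf J) \<Longrightarrow> hh J t = (\<Sum>ab\<in>set_pmf J. pmf J ab * rho J ab powr t)"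
  by (simp add: hh_def E_sum)

lemma chern_up_J:
  assumes fin: "finite (set_pmf J)" and lt: "mut_inf J < r"
  shows "\<exists>t>0. t \<le> 1 \<and> hh J t < 2 powr (t * r)"
  using chern_up[OF fin, of "pmf J" "rho J" r] fin lt
  by (simp add: sum_pmf_eq_1 rho_pos mut_inf_rho hh_sum)

lemma chern_down_J:
  assumes fin: "finite (set_pmf J)" and lt: "r < mut_inf J"
  shows "\<exists>t>0. hh J (-t) < 2 powr (-t * r)"
  using chern_down[OF fin, of "pmf J" "rho J" r] fin lt
  by (simp add: sum_pmf_eq_1 rho_pos mut_inf_rho hh_sum)

lemma E_rhon_powr:
  assumes fin: "finite (set_pmf J)"
  shows "measure_pmf.expectation (iid_list J n) (\<lambda>l. rhon J l powr t) = hh J t ^ n"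
proof -
  have "measure_pmf.expectation (iid_list J n) (\<lambda>l. rhon J l powr t) =
        measure_pmf.expectation (iid_list J n) (\<lambda>l. prod_list (map (\<lambda>a. rho J a powr t) l))"
    by (simp add: rhon_def prod_list_powr rho_nn)
  also have "\<dots> = hh J t ^ n" using fin by (simp add: E_iid_prod hh_def)
  finally show ?thesis .
qed

lemma prob_rhon_le:
  assumes fin: "finite (set_pmf J)" and T: "T > 0" and t: "t > 0"
  shows "measure_pmf.prob (iid_list J n) {l. rhon J l \<le> T} \<le> T powr t * hh J (-t) ^ n"
proof -
  have "measure_pmf.prob (iid_list J n) {l. rhon J l \<le> T} \<le>
        measure_pmf.expectation (iid_list J n) (\<lambda>l. T powr t * rhon J l powr (-t))"
  proof (rule markov[OF finite_iid[OF fin]])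
    fix l assume l: "l \<in> set_pmf (iid_list J n)" "l \<in> {l. rhon J l \<le> T}"
    then have p: "rhon J l > 0" using set_iid_sub rhon_pos by blast
    have "T powr (-t) \<le> rhon J l powr (-t)"
      using l p t by (intro powr_mono2') auto
    then have "T powr t * T powr (-t) \<le> T powr t * rhon J l powr (-t)" by (rule mult_left_mono) simp
    then show "1 \<le> T powr t * rhon J l powr (-t)" using T by (simp add: powr_minus field_simps)
  qed simp
  also have "\<dots> = T powr t * hh J (-t) ^ n" using E_rhon_powr[OF fin] by simp
  finally show ?thesis .
qed

lemma E_rhon_indep:
  assumes fin: "finite (set_pmf J)"
  shows "measure_pmf.expectation (iid_list (pair_pmf (map_pmf fst J) (map_pmf snd J)) n) (rhon J) \<le> 1"
proof -
  let ?P = "pair_pmf (map_pmf fst J) (map_pmf snd J)"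
  have finP: "finite (set_pmf ?P)" using fin by (simp add: set_pair_pmf)
  have "measure_pmf.expectation ?P (rho J) = (\<Sum>ab\<in>set_pmf ?P. pmf ?P ab * rho J ab)"
    using finP by (simp add: E_sum)
  also have "\<dots> = (\<Sum>ab\<in>set_pmf ?P. pmf J ab)"
  proof (intro sum.cong refl)
    fix ab assume "ab \<in> set_pmf ?P"
    then have "fst ab \<in> set_pmf (map_pmf fst J)" "snd ab \<in> set_pmf (map_pmf snd J)"
      unfolding set_pair_pmf by (auto simp del: set_map_pmf)
    then have "pmf (map_pmf fst J) (fst ab) > 0" "pmf (map_pmf snd J) (snd ab) > 0"
      by (simp_all only: pmf_positive)
    then show "pmf ?P ab * rho J ab = pmf J ab"
      by (cases ab) (simp add: pmf_pair rho_def)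
  qed
  also have "\<dots> = measure_pmf.prob J (set_pmf ?P)" using finP by (simp add: measure_measure_pmf_finite)
  also have "\<dots> \<le> 1" by simp
  finally have h: "measure_pmf.expectation ?P (rho J) \<le> 1" .
  have "measure_pmf.expectation (iid_list ?P n) (rhon J) = measure_pmf.expectation ?P (rho J) ^ n"
    unfolding rhon_def using finP by (simp add: E_iid_prod)
  also have "\<dots> \<le> 1" using h by (simp add: power_le_one integral_nonneg_AE rho_nn)
  finally show ?thesis .
qed



lemma E_mono:
  fixes f g :: "'a \<Rightarrow> real"
  assumes "finite (set_pmf M)" "\<And>x. x \<in> set_pmf M \<Longrightarrow> f x \<le> g x"
  shows "measure_pmf.expectation M f \<le> measure_pmf.expectation M g"
  using assms by (simp add: E_sum sum_mono mult_left_mono)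

lemma E_add:
  fixes f g :: "'a \<Rightarrow> real"
  assumes "finite (set_pmf M)"
  shows "measure_pmf.expectation M (\<lambda>x. f x + g x) = measure_pmf.expectation M f + measure_pmf.expectation M g"
  using assms by (simp add: E_sum sum.distrib distrib_left)

lemma E_sumI:
  fixes f :: "'i \<Rightarrow> 'a \<Rightarrow> real"
  assumes "finite (set_pmf M)"
  shows "measure_pmf.expectation M (\<lambda>x. \<Sum>i\<in>I. f i x) = (\<Sum>i\<in>I. measure_pmf.expectation M (f i))"
  using assms by (simp add: E_sum sum_distrib_left sum.swap[of _ I])

lemma E_cmult:
  fixes f :: "'a \<Rightarrow> real"
  shows "measure_pmf.expectation M (\<lambda>x. c * f x) = c * measure_pmf.expectation M f"
  by simp

lemma E_swap:
  fixes h :: "'a \<Rightarrow> 'b \<Rightarrow> real"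
  assumes "finite (set_pmf p)" "finite (set_pmf q)"
  shows "measure_pmf.expectation p (\<lambda>x. measure_pmf.expectation q (\<lambda>y. h x y)) =
         measure_pmf.expectation q (\<lambda>y. measure_pmf.expectation p (\<lambda>x. h x y))"
  using assms by (simp add: E_sum sum_distrib_left sum.swap[of _ "set_pmf p"] mult_ac)

lemma prob_bind:
  assumes "finite (set_pmf M)" "\<And>x. x \<in> set_pmf M \<Longrightarrow> finite (set_pmf (N x))"
  shows "measure_pmf.prob (bind_pmf M N) S = measure_pmf.expectation M (\<lambda>x. measure_pmf.prob (N x) S)"
proof -
  have "measure_pmf.prob (bind_pmf M N) S = measure_pmf.expectation (bind_pmf M N) (indicator S)" by simp
  also have "\<dots> = measure_pmf.expectation M (\<lambda>x. measure_pmf.expectation (N x) (indicator S))"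
    using assms by (rule E_bind)
  finally show ?thesis by simp
qed

lemma prob_nn: "0 \<le> measure_pmf.prob M S" by simp

lemma finite_bind: "finite (set_pmf M) \<Longrightarrow> (\<And>x. x \<in> set_pmf M \<Longrightarrow> finite (set_pmf (N x))) \<Longrightarrow>
  finite (set_pmf (bind_pmf M N))"
  by auto

lemma finite_Pi: "finite A \<Longrightarrow> (\<And>x. x \<in> A \<Longrightarrow> finite (set_pmf (p x))) \<Longrightarrow> finite (set_pmf (Pi_pmf A d p))"
  by (auto simp: set_Pi_pmf)

lemma E_Pi_split:
  fixes G :: "_ \<Rightarrow> real"
  assumes A: "finite A" "m \<in> A" and fin: "\<And>x. x \<in> A \<Longrightarrow> finite (set_pmf (p x))"
  shows "measure_pmf.expectation (Pi_pmf A d p) G =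
    measure_pmf.expectation (p m) (\<lambda>y. measure_pmf.expectation (Pi_pmf (A - {m}) d p) (\<lambda>f. G (f(m := y))))"
proof -
  have Ai: "A = insert m (A - {m})" using A by auto
  have "Pi_pmf A d p = map_pmf (\<lambda>(y,f). f(m:=y)) (pair_pmf (p m) (Pi_pmf (A - {m}) d p))"
    by (subst Ai, rule Pi_pmf_insert) (use A in auto)
  then have "measure_pmf.expectation (Pi_pmf A d p) G =
    measure_pmf.expectation (pair_pmf (p m) (Pi_pmf (A - {m}) d p)) (\<lambda>(y,f). G (f(m:=y)))"
    by (simp add: case_prod_unfold)
  also have "\<dots> = measure_pmf.expectation (p m) (\<lambda>y. measure_pmf.expectation (Pi_pmf (A - {m}) d p) (\<lambda>f. G (f(m := y))))"
  proof -
    have fP: "finite (set_pmf (Pi_pmf (A - {m}) d p))" using A fin by (intro finite_Pi) auto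
    have fm: "finite (set_pmf (p m))" using A fin by auto
    show ?thesis unfolding pair_pmf_def
      by (subst E_bind) (use fP fm in \<open>auto simp: E_bind\<close>)
  qed
  finally show ?thesis .
qed

lemma E_Pi_comp:
  fixes G :: "_ \<Rightarrow> real"
  assumes "finite A" "m \<in> A"
  shows "measure_pmf.expectation (Pi_pmf A d p) (\<lambda>f. G (f m)) = measure_pmf.expectation (p m) G"
proof -
  have "measure_pmf.expectation (Pi_pmf A d p) (\<lambda>f. G (f m)) = measure_pmf.expectation (map_pmf (\<lambda>f. f m) (Pi_pmf A d p)) G"
    by simp
  also have "\<dots> = measure_pmf.expectation (p m) G" using assms by (simp add: Pi_pmf_component)
  finally show ?thesis .
qed

lemma zip_unz: "(case unz l of (a, b) \<Rightarrow> zip a b) = l"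
  by (simp add: unz_def zip_map_fst_snd)

lemma fst_unz_len: "length (fst (unz l)) = length (snd (unz l))"
  by (simp add: unz_def)



definition jt :: "nat pmf \<Rightarrow> (nat \<Rightarrow> 'b pmf) \<Rightarrow> (nat \<times> 'b) pmf" where
  "jt PU K = bind_pmf PU (\<lambda>u. map_pmf (Pair u) (K u))"

definition Kn :: "(nat \<Rightarrow> 'b pmf) \<Rightarrow> nat list \<Rightarrow> 'b list pmf" where
  "Kn K us = prod_pmf_list (map K us)"

definition CB :: "nat pmf \<Rightarrow> nat \<Rightarrow> nat \<Rightarrow> (nat \<Rightarrow> nat list) pmf" where
  "CB PU n N = Pi_pmf {0..<N} [] (\<lambda>_. iid_list PU n)"

definition dec :: "(nat \<times> 'b) pmf \<Rightarrow> real \<Rightarrow> nat \<Rightarrow> (nat \<Rightarrow> nat list) \<Rightarrow> 'b list \<Rightarrow> nat" where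
  "dec J T N cb ys = (if \<exists>m<N. T < rhon J (zip (cb m) ys) then LEAST m. m < N \<and> T < rhon J (zip (cb m) ys) else 0)"

definition errc :: "(nat \<times> 'b) pmf \<Rightarrow> (nat \<Rightarrow> 'b pmf) \<Rightarrow> real \<Rightarrow> nat \<Rightarrow> (nat \<Rightarrow> nat list) \<Rightarrow> real" where
  "errc J K T N cb = (\<Sum>m<N. measure_pmf.prob (Kn K (cb m)) {ys. dec J T N cb ys \<noteq> m}) / N"

lemma jt_fst: "map_pmf fst (jt PU K) = PU"
  by (simp add: jt_def map_bind_pmf pmf.map_comp o_def map_pmf_const bind_return_pmf')

lemma jt_snd: "map_pmf snd (jt PU K) = bind_pmf PU K"
  by (simp add: jt_def map_bind_pmf pmf.map_comp o_def)

lemma fin_jt: "finite (set_pmf PU) \<Longrightarrow> (\<And>u. finite (set_pmf (K u))) \<Longrightarrow> finite (set_pmf (jt PU K))"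
  by (auto simp: jt_def)

lemma fin_Kn: "(\<And>u. finite (set_pmf (K u))) \<Longrightarrow> finite (set_pmf (Kn K us))"
  unfolding Kn_def by (rule finite_set_prod_pmf_list) auto

lemma joint_iid: "bind_pmf (iid_list PU n) (\<lambda>us. map_pmf (Pair us) (Kn K us)) = map_pmf unz (iid_list (jt PU K) n)"
  unfolding iid_as_prod Kn_def jt_def by (simp add: joint_prod)

lemma marg_iid: "bind_pmf (iid_list PU n) (Kn K) = iid_list (bind_pmf PU K) n"
  unfolding iid_as_prod Kn_def using marg_prod[of "replicate n PU" K] by simp

lemma pair_iid: "pair_pmf (iid_list A n) (iid_list B n) = map_pmf unz (iid_list (pair_pmf A B) n)"
  unfolding iid_as_prod by (simp add: pair_prod zip_replicate)

lemma dec_err: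
  assumes "m < N" "dec J T N cb ys \<noteq> m"
  shows "rhon J (zip (cb m) ys) \<le> T \<or> (\<exists>m'\<in>{0..<N} - {m}. T < rhon J (zip (cb m') ys))"
proof (rule ccontr)
  assume "\<not> ?thesis"
  then have a: "T < rhon J (zip (cb m) ys)" and b: "\<And>m'. m' \<in> {0..<N} - {m} \<Longrightarrow> \<not> T < rhon J (zip (cb m') ys)"
    by auto
  let ?P = "\<lambda>m. m < N \<and> T < rhon J (zip (cb m) ys)"
  have "?P m" using a assms by auto
  then have "?P (Least ?P)" by (rule LeastI)
  then have "Least ?P = m" using b by force
  moreover have ex: "\<exists>m'<N. T < rhon J (zip (cb m') ys)" using a assms by blast
  ultimately show False using assms unfolding dec_def by simp
qed

lemma prob_dec:
  assumes "m < N"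
  shows "measure_pmf.prob (Kn K (cb m)) {ys. dec J T N cb ys \<noteq> m} \<le>
    measure_pmf.prob (Kn K (cb m)) {ys. rhon J (zip (cb m) ys) \<le> T} +
    (\<Sum>m'\<in>{0..<N} - {m}. measure_pmf.prob (Kn K (cb m)) {ys. T < rhon J (zip (cb m') ys)})"
proof -
  let ?M = "Kn K (cb m)"
  have "measure_pmf.prob ?M {ys. dec J T N cb ys \<noteq> m} \<le>
    measure_pmf.prob ?M ({ys. rhon J (zip (cb m) ys) \<le> T} \<union> (\<Union>m'\<in>{0..<N} - {m}. {ys. T < rhon J (zip (cb m') ys)}))"
  proof (intro measure_pmf.finite_measure_mono subsetI)
    fix ys assume "ys \<in> {ys. dec J T N cb ys \<noteq> m}"
    then have "dec J T N cb ys \<noteq> m" by simp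
    from dec_err[OF assms this] show "ys \<in> {ys. rhon J (zip (cb m) ys) \<le> T} \<union> (\<Union>m'\<in>{0..<N} - {m}. {ys. T < rhon J (zip (cb m') ys)})"
      by auto
  qed auto
  also have "\<dots> \<le> measure_pmf.prob ?M {ys. rhon J (zip (cb m) ys) \<le> T} +
     measure_pmf.prob ?M (\<Union>m'\<in>{0..<N} - {m}. {ys. T < rhon J (zip (cb m') ys)})"
    by (rule measure_Un_le) auto
  also have "measure_pmf.prob ?M (\<Union>m'\<in>{0..<N} - {m}. {ys. T < rhon J (zip (cb m') ys)}) \<le>
     (\<Sum>m'\<in>{0..<N} - {m}. measure_pmf.prob ?M {ys. T < rhon J (zip (cb m') ys)})"
    by (rule measure_pmf.finite_measure_subadditive_finite) auto
  finally show ?thesis by simp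
qed



lemma prob_pair:
  assumes "finite (set_pmf U)" "finite (set_pmf V)"
  shows "measure_pmf.prob (pair_pmf U V) S = measure_pmf.expectation U (\<lambda>u. measure_pmf.prob V {v. (u, v) \<in> S})"
proof -
  have "pair_pmf U V = bind_pmf U (\<lambda>u. map_pmf (Pair u) V)"
    by (simp add: pair_pmf_def map_pmf_def)
  then show ?thesis using assms by (simp add: prob_bind vimage_def)
qed

lemma E_err:
  fixes PU :: "nat pmf" and K :: "nat \<Rightarrow> 'b pmf"
  assumes fPU: "finite (set_pmf PU)" and fK: "\<And>u. finite (set_pmf (K u))"
    and N: "N > 0" and T: "T > 0"
  shows "measure_pmf.expectation (CB PU n N) (errc (jt PU K) K T N) \<le>
    measure_pmf.prob (iid_list (jt PU K) n) {l. rhon (jt PU K) l \<le> T} + (N - 1) / T"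
proof -
  define J where "J = jt PU K"
  define U where "U = iid_list PU n"
  define A where "A = {0..<N}"
  define P1 where "P1 = measure_pmf.prob (iid_list J n) {l. rhon J l \<le> T}"
  have fU: "finite (set_pmf U)" unfolding U_def using fPU by (rule finite_iid)
  have fKn: "\<And>us. finite (set_pmf (Kn K us))" using fK by (rule fin_Kn)
  have fJ: "finite (set_pmf J)" unfolding J_def using fPU fK by (rule fin_jt)
  have fCB: "finite (set_pmf (CB PU n N))" unfolding CB_def using fU U_def by (intro finite_Pi) auto
  have fPY: "finite (set_pmf (bind_pmf PU K))" using fPU fK by auto
  have fY: "finite (set_pmf (iid_list (bind_pmf PU K) n))" using fPY by (rule finite_iid)
  have t1: "measure_pmf.expectation U (\<lambda>y. measure_pmf.prob (Kn K y) {ys. rhon J (zip y ys) \<le> T}) = P1"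
  proof -
    have "measure_pmf.expectation U (\<lambda>y. measure_pmf.prob (Kn K y) {ys. rhon J (zip y ys) \<le> T}) =
      measure_pmf.expectation U (\<lambda>y. measure_pmf.prob (map_pmf (Pair y) (Kn K y)) {(a, b). rhon J (zip a b) \<le> T})"
      by (simp add: vimage_def)
    also have "\<dots> = measure_pmf.prob (bind_pmf U (\<lambda>y. map_pmf (Pair y) (Kn K y))) {(a, b). rhon J (zip a b) \<le> T}"
      using fU fKn by (subst prob_bind) auto
    also have "\<dots> = P1" unfolding U_def joint_iid J_def P1_def
      by (simp add: vimage_def unz_def case_prod_unfold zip_map_fst_snd)
    finally show ?thesis .
  qed
  have t2: "measure_pmf.expectation U (\<lambda>y. measure_pmf.expectation U (\<lambda>u'. measure_pmf.prob (Kn K y) {ys. T < rhon J (zip u' ys)})) \<le> 1 / T"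
  proof -
    have "measure_pmf.expectation U (\<lambda>y. measure_pmf.expectation U (\<lambda>u'. measure_pmf.prob (Kn K y) {ys. T < rhon J (zip u' ys)}))
      = measure_pmf.expectation U (\<lambda>u'. measure_pmf.expectation U (\<lambda>y. measure_pmf.prob (Kn K y) {ys. T < rhon J (zip u' ys)}))"
      using fU by (intro E_swap fU)
    also have "\<dots> = measure_pmf.expectation U (\<lambda>u'. measure_pmf.prob (iid_list (bind_pmf PU K) n) {ys. T < rhon J (zip u' ys)})"
      using fU fKn by (simp add: prob_bind[symmetric] U_def marg_iid)
    also have "\<dots> = measure_pmf.prob (pair_pmf U (iid_list (bind_pmf PU K) n)) {(a, b). T < rhon J (zip a b)}"
      using fU fY by (simp add: prob_pair)
    also have "\<dots> = measure_pmf.prob (iid_list (pair_pmf (map_pmf fst J) (map_pmf snd J)) n) {l. T < rhon J l}"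
      unfolding U_def J_def jt_fst jt_snd pair_iid
      by (simp add: vimage_def unz_def case_prod_unfold zip_map_fst_snd)
    also have "\<dots> \<le> measure_pmf.expectation (iid_list (pair_pmf (map_pmf fst J) (map_pmf snd J)) n) (\<lambda>l. rhon J l / T)"
      using fJ T by (intro markov finite_iid) (auto simp: set_pair_pmf rhon_nn)
    also have "\<dots> = measure_pmf.expectation (iid_list (pair_pmf (map_pmf fst J) (map_pmf snd J)) n) (rhon J) / T"
      by simp
    also have "\<dots> \<le> 1 / T" using E_rhon_indep[OF fJ, of n] T by (simp add: divide_right_mono)
    finally show ?thesis .
  qed
  have per_m: "measure_pmf.expectation (CB PU n N) (\<lambda>cb. measure_pmf.prob (Kn K (cb m)) {ys. dec J T N cb ys \<noteq> m})
      \<le> P1 + (N - 1) / T" if m: "m < N" for m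
  proof -
    let ?R = "Pi_pmf (A - {m}) [] (\<lambda>_. U)"
    have fR: "finite (set_pmf ?R)" using fU A_def by (intro finite_Pi) auto
    have "measure_pmf.expectation (CB PU n N) (\<lambda>cb. measure_pmf.prob (Kn K (cb m)) {ys. dec J T N cb ys \<noteq> m})
      = measure_pmf.expectation U (\<lambda>y. measure_pmf.expectation ?R (\<lambda>f. measure_pmf.prob (Kn K ((f(m:=y)) m)) {ys. dec J T N (f(m:=y)) ys \<noteq> m}))"
      unfolding CB_def U_def[symmetric] A_def[symmetric]
      using m fU by (subst E_Pi_split[of A m]) (auto simp: A_def)
    also have "\<dots> \<le> measure_pmf.expectation U (\<lambda>y. measure_pmf.expectation ?R (\<lambda>f.
        measure_pmf.prob (Kn K y) {ys. rhon J (zip y ys) \<le> T} +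
        (\<Sum>m'\<in>A - {m}. measure_pmf.prob (Kn K y) {ys. T < rhon J (zip (f m') ys)})))"
    proof (intro E_mono fU fR)
      fix y f
      have "measure_pmf.prob (Kn K ((f(m:=y)) m)) {ys. dec J T N (f(m:=y)) ys \<noteq> m} \<le>
        measure_pmf.prob (Kn K ((f(m:=y)) m)) {ys. rhon J (zip ((f(m:=y)) m) ys) \<le> T} +
        (\<Sum>m'\<in>{0..<N} - {m}. measure_pmf.prob (Kn K ((f(m:=y)) m)) {ys. T < rhon J (zip ((f(m:=y)) m') ys)})"
        by (rule prob_dec[OF m])
      also have "(\<Sum>m'\<in>{0..<N} - {m}. measure_pmf.prob (Kn K ((f(m:=y)) m)) {ys. T < rhon J (zip ((f(m:=y)) m') ys)})
         = (\<Sum>m'\<in>A - {m}. measure_pmf.prob (Kn K y) {ys. T < rhon J (zip (f m') ys)})"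
        unfolding A_def by (intro sum.cong) auto
      finally show "measure_pmf.prob (Kn K ((f(m:=y)) m)) {ys. dec J T N (f(m:=y)) ys \<noteq> m} \<le>
        measure_pmf.prob (Kn K y) {ys. rhon J (zip y ys) \<le> T} +
        (\<Sum>m'\<in>A - {m}. measure_pmf.prob (Kn K y) {ys. T < rhon J (zip (f m') ys)})" by (simp only: fun_upd_same)
    qed
    also have "\<dots> = measure_pmf.expectation U (\<lambda>y. measure_pmf.prob (Kn K y) {ys. rhon J (zip y ys) \<le> T} +
        (\<Sum>m'\<in>A - {m}. measure_pmf.expectation U (\<lambda>u'. measure_pmf.prob (Kn K y) {ys. T < rhon J (zip u' ys)})))"
    proof (rule arg_cong[where f="measure_pmf.expectation U"], rule ext)
      fix y
      have "measure_pmf.expectation ?R (\<lambda>f. measure_pmf.prob (Kn K y) {ys. rhon J (zip y ys) \<le> T} +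
        (\<Sum>m'\<in>A - {m}. measure_pmf.prob (Kn K y) {ys. T < rhon J (zip (f m') ys)})) =
        measure_pmf.prob (Kn K y) {ys. rhon J (zip y ys) \<le> T} +
        (\<Sum>m'\<in>A - {m}. measure_pmf.expectation ?R (\<lambda>f. measure_pmf.prob (Kn K y) {ys. T < rhon J (zip (f m') ys)}))"
        using fR by (simp add: E_add E_sumI)
      also have "\<dots> = measure_pmf.prob (Kn K y) {ys. rhon J (zip y ys) \<le> T} +
        (\<Sum>m'\<in>A - {m}. measure_pmf.expectation U (\<lambda>u'. measure_pmf.prob (Kn K y) {ys. T < rhon J (zip u' ys)}))"
        by (intro arg_cong2[where f="(+)"] sum.cong refl E_Pi_comp[where G="\<lambda>u'. measure_pmf.prob (Kn K y) {ys. T < rhon J (zip u' ys)}"]) (auto simp: A_def)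
      finally show "measure_pmf.expectation ?R (\<lambda>f. measure_pmf.prob (Kn K y) {ys. rhon J (zip y ys) \<le> T} +
        (\<Sum>m'\<in>A - {m}. measure_pmf.prob (Kn K y) {ys. T < rhon J (zip (f m') ys)})) =
        measure_pmf.prob (Kn K y) {ys. rhon J (zip y ys) \<le> T} +
        (\<Sum>m'\<in>A - {m}. measure_pmf.expectation U (\<lambda>u'. measure_pmf.prob (Kn K y) {ys. T < rhon J (zip u' ys)}))" .
    qed
    also have "\<dots> = P1 + (\<Sum>m'\<in>A - {m}. measure_pmf.expectation U (\<lambda>y. measure_pmf.expectation U (\<lambda>u'. measure_pmf.prob (Kn K y) {ys. T < rhon J (zip u' ys)})))"
      using fU t1 by (simp add: E_add E_sumI)
    also have "\<dots> \<le> P1 + (\<Sum>m'\<in>A - {m}. 1 / T)"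
      using t2 by (intro add_left_mono sum_mono) auto
    also have "\<dots> = P1 + (N - 1) / T" using m by (simp add: A_def)
    finally show ?thesis .
  qed
  have "measure_pmf.expectation (CB PU n N) (errc J K T N) =
     (\<Sum>m<N. measure_pmf.expectation (CB PU n N) (\<lambda>cb. measure_pmf.prob (Kn K (cb m)) {ys. dec J T N cb ys \<noteq> m})) / N"
    unfolding errc_def using fCB by (simp add: E_sumI)
  also have "\<dots> \<le> (\<Sum>m<N. P1 + (N - 1) / T) / N"
    using per_m by (intro divide_right_mono sum_mono) auto
  also have "\<dots> = P1 + (N - 1) / T" using N by simp
  finally show ?thesis using N by (simp add: J_def P1_def of_nat_diff)
qed



lemma pmf_prod_pmf_list_Cons: "pmf (prod_pmf_list (p # ps)) (x # xs) = pmf p x * pmf (prod_pmf_list ps) xs"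
proof -
  have "prod_pmf_list (p # ps) = map_pmf (\<lambda>(x, xs). x # xs) (pair_pmf p (prod_pmf_list ps))"
    by (simp add: pair_pmf_def map_pmf_def bind_assoc_pmf bind_return_pmf)
  moreover have "inj (\<lambda>(x::'a, xs). x # xs)" by (auto simp: inj_def)
  ultimately show ?thesis
    using pmf_map_inj'[of "\<lambda>(x, xs). x # xs" "pair_pmf p (prod_pmf_list ps)" "(x, xs)"]
    by (simp add: pmf_pair)
qed

lemma pmf_prod_pmf_list:
  "length xs = length ps \<Longrightarrow> pmf (prod_pmf_list ps) xs = prod_list (map2 pmf ps xs)"
proof (induction ps arbitrary: xs)
  case Nil then show ?case by simp
next
  case (Cons p ps)
  then obtain x xs' where "xs = x # xs'" "length xs' = length ps" by (cases xs) auto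
  then show ?case using Cons.IH by (simp only: pmf_prod_pmf_list_Cons) simp
qed

lemma pmf_jt: "pmf (jt PU L) (u, z) = pmf PU u * pmf (L u) z"
proof -
  have "jt PU L = map_pmf (\<lambda>(u, z). (u, z)) (bind_pmf PU (\<lambda>u. bind_pmf (L u) (\<lambda>z. return_pmf (u, z))))"
    by (simp add: jt_def map_pmf_def)
  also have "bind_pmf PU (\<lambda>u. bind_pmf (L u) (\<lambda>z. return_pmf (u, z))) = map_pmf (\<lambda>(u,z). (u,z)) (bind_pmf PU (\<lambda>u. map_pmf (Pair u) (L u)))"
    by (simp add: map_pmf_def bind_assoc_pmf bind_return_pmf)
  finally have e: "jt PU L = bind_pmf PU (\<lambda>u. map_pmf (Pair u) (L u))" by (simp add: jt_def)
  have "pmf (jt PU L) (u, z) = measure_pmf.expectation PU (\<lambda>u'. pmf (map_pmf (Pair u') (L u')) (u, z))"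
    unfolding e by (rule pmf_bind)
  also have "\<dots> = measure_pmf.expectation PU (\<lambda>u'. indicator {u} u' * pmf (L u) z)"
  proof (rule arg_cong[where f="measure_pmf.expectation PU"], rule ext)
    fix u'
    show "pmf (map_pmf (Pair u') (L u')) (u, z) = indicator {u} u' * pmf (L u) z"
    proof (cases "u' = u")
      case True
      then show ?thesis using pmf_map_inj'[of "Pair u" "L u" z] by (simp add: inj_def)
    next
      case False
      then have "(u, z) \<notin> set_pmf (map_pmf (Pair u') (L u'))" by auto
      then show ?thesis using False by (simp add: set_pmf_eq)
    qed
  qed
  also have "\<dots> = pmf PU u * pmf (L u) z"
    by (simp add: measure_pmf_single)
  finally show ?thesis .
qed

lemma ratio_rhon:
  assumes l: "l \<in> set_pmf (iid_list (jt PU L) n)"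
  shows "pmf (Kn L (map fst l)) (map snd l) / pmf (iid_list (bind_pmf PU L) n) (map snd l) = rhon (jt PU L) l"
proof -
  from set_iid_sub[OF l] have sl: "set l \<subseteq> set_pmf (jt PU L)" and ln: "length l = n" by auto
  have "\<And>ab. ab \<in> set_pmf (jt PU L) \<Longrightarrow> rho (jt PU L) ab = pmf (L (fst ab)) (snd ab) / pmf (bind_pmf PU L) (snd ab)"
  proof -
    fix ab assume ab: "ab \<in> set_pmf (jt PU L)"
    obtain u z where abe: "ab = (u, z)" by (cases ab)
    have "u \<in> set_pmf (map_pmf fst (jt PU L))" using ab abe by force
    then have "pmf PU u > 0" by (simp add: jt_fst pmf_positive)
    then show "rho (jt PU L) ab = pmf (L (fst ab)) (snd ab) / pmf (bind_pmf PU L) (snd ab)"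
      by (simp add: rho_def abe pmf_jt jt_fst jt_snd)
  qed
  with sl have "rhon (jt PU L) l = prod_list (map (\<lambda>ab. pmf (L (fst ab)) (snd ab) / pmf (bind_pmf PU L) (snd ab)) l)"
    unfolding rhon_def by (intro arg_cong[where f=prod_list] map_cong) auto
  also have "\<dots> = prod_list (map2 pmf (map L (map fst l)) (map snd l)) / prod_list (map2 pmf (replicate (length l) (bind_pmf PU L)) (map snd l))"
    by (induction l) (auto simp: field_simps)
  also have "\<dots> = pmf (Kn L (map fst l)) (map snd l) / pmf (iid_list (bind_pmf PU L) n) (map snd l)"
    unfolding Kn_def iid_as_prod using ln by (simp add: pmf_prod_pmf_list)
  finally show ?thesis by simp
qed



definition Pc :: "(nat \<Rightarrow> 'c pmf) \<Rightarrow> nat \<Rightarrow> (nat \<Rightarrow> nat list) \<Rightarrow> 'c list pmf" where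
  "Pc L N cb = bind_pmf (pmf_of_set {0..<N}) (\<lambda>m. Kn L (cb m))"

lemma E_affine:
  fixes f :: "'a \<Rightarrow> real"
  assumes "finite (set_pmf M)"
  shows "measure_pmf.expectation M (\<lambda>x. (a + f x) / D) = (a + measure_pmf.expectation M f) / D"
  using assms by (simp add: E_sum sum_pmf_eq_1 add_divide_distrib distrib_left sum.distrib
     sum_distrib_right[symmetric] sum_divide_distrib[symmetric] times_divide_eq_right)

lemma prod_list_pos: "(\<And>x. x \<in> set xs \<Longrightarrow> (0::real) < x) \<Longrightarrow> 0 < prod_list xs"
  by (induction xs) auto

lemma pmf_iid_pos:
  assumes "\<And>z. pmf Q z > 0" "length zs = n"
  shows "pmf (iid_list Q n) zs > 0"
  unfolding iid_as_prod using assms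
  by (subst pmf_prod_pmf_list) (auto intro!: prod_list_pos simp: set_zip)

lemma len_Kn: "z \<in> set_pmf (Kn L y) \<Longrightarrow> length z = length y"
  unfolding Kn_def by (drule length_prod_pmf_list) simp

lemma E_KL:
  fixes PU :: "nat pmf" and L :: "nat \<Rightarrow> 'c pmf"
  assumes fPU: "finite (set_pmf PU)" and fL: "\<And>u. finite (set_pmf (L u))"
    and Qpos: "\<And>z. pmf (bind_pmf PU L) z > 0"
    and N: "N > 0" and t: "0 < t" "t \<le> 1"
  shows "measure_pmf.expectation (CB PU n N) (\<lambda>cb. kl_div (Pc L N cb) (iid_list (bind_pmf PU L) n))
     \<le> real N powr (-t) / (t * ln 2) * hh (jt PU L) t ^ n"
proof -
  define Q where "Q = bind_pmf PU L"
  define Qn where "Qn = iid_list Q n"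
  define U where "U = iid_list PU n"
  define A where "A = {0..<N}"
  define C where "C = real N powr (-t) / (t * ln 2)"
  define B where "B = C * hh (jt PU L) t ^ n"
  have fU: "finite (set_pmf U)" unfolding U_def using fPU by (rule finite_iid)
  have fKn: "\<And>us. finite (set_pmf (Kn L us))" using fL by (rule fin_Kn)
  have fJ: "finite (set_pmf (jt PU L))" using fPU fL by (rule fin_jt)
  have fCB: "finite (set_pmf (CB PU n N))" unfolding CB_def using fU U_def by (intro finite_Pi) auto
  have fA: "finite A" "A \<noteq> {}" using N by (auto simp: A_def)
  have fPc: "\<And>cb. finite (set_pmf (Pc L N cb))" unfolding Pc_def using fA fKn by (auto simp: A_def)
  have Qnpos: "\<And>z. length z = n \<Longrightarrow> pmf Qn z > 0" unfolding Qn_def Q_def using Qpos by (rule pmf_iid_pos)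
  have lenU: "\<And>y. y \<in> set_pmf U \<Longrightarrow> length y = n" unfolding U_def by (rule set_iid)
  have pmfPc: "pmf (Pc L N cb) z = (\<Sum>m'\<in>A. pmf (Kn L (cb m')) z) / N" for cb z
    unfolding Pc_def A_def using N by (simp add: pmf_bind integral_pmf_of_set)
  have klE: "kl_div (Pc L N cb) Qn = (\<Sum>m\<in>A. measure_pmf.expectation (Kn L (cb m)) (\<lambda>z. log 2 (pmf (Pc L N cb) z / pmf Qn z))) / N" for cb
  proof -
    have "kl_div (Pc L N cb) Qn = measure_pmf.expectation (Pc L N cb) (\<lambda>z. log 2 (pmf (Pc L N cb) z / pmf Qn z))"
      unfolding kl_div_def using fPc by (simp add: E_sum)
    also have "\<dots> = (\<Sum>m\<in>A. measure_pmf.expectation (Kn L (cb m)) (\<lambda>z. log 2 (pmf (Pc L N cb) z / pmf Qn z))) / N"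
    proof -
      have "measure_pmf.expectation (Pc L N cb) (\<lambda>z. log 2 (pmf (Pc L N cb) z / pmf Qn z)) =
        (\<Sum>m\<in>A. measure_pmf.expectation (Kn L (cb m)) (\<lambda>z. log 2 (pmf (Pc L N cb) z / pmf Qn z)) /\<^sub>R real (card A))"
        unfolding Pc_def A_def using fA fKn
        by (subst pmf_expectation_bind_pmf_of_set) (auto simp: A_def)
      also have "\<dots> = (\<Sum>m\<in>A. measure_pmf.expectation (Kn L (cb m)) (\<lambda>z. log 2 (pmf (Pc L N cb) z / pmf Qn z))) / N"
        by (simp add: A_def sum_divide_distrib divide_inverse_commute sum_distrib_left)
      finally show ?thesis .
    qed
    finally show ?thesis .
  qed
  have EU_pmf: "measure_pmf.expectation U (\<lambda>u. pmf (Kn L u) z) = pmf Qn z" for z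
    by (simp add: pmf_bind[symmetric] U_def marg_iid Qn_def Q_def)
  have final: "measure_pmf.expectation U (\<lambda>y. measure_pmf.expectation (Kn L y) (\<lambda>z. C * (pmf (Kn L y) z / pmf Qn z) powr t)) \<le> B"
  proof -
    have "measure_pmf.expectation U (\<lambda>y. measure_pmf.expectation (Kn L y) (\<lambda>z. C * (pmf (Kn L y) z / pmf Qn z) powr t))
      = measure_pmf.expectation (bind_pmf U (\<lambda>y. map_pmf (Pair y) (Kn L y))) (\<lambda>(y, z). C * (pmf (Kn L y) z / pmf Qn z) powr t)"
      using fU fKn by (subst E_bind) auto
    also have "\<dots> = measure_pmf.expectation (iid_list (jt PU L) n) (\<lambda>l. C * (pmf (Kn L (map fst l)) (map snd l) / pmf Qn (map snd l)) powr t)"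
      unfolding U_def joint_iid by (simp add: unz_def)
    also have "\<dots> \<le> measure_pmf.expectation (iid_list (jt PU L) n) (\<lambda>l. C * rhon (jt PU L) l powr t)"
    proof (intro E_mono finite_iid fJ)
      fix l assume "l \<in> set_pmf (iid_list (jt PU L) n)"
      from ratio_rhon[OF this] show "C * (pmf (Kn L (map fst l)) (map snd l) / pmf Qn (map snd l)) powr t \<le> C * rhon (jt PU L) l powr t"
        by (simp add: Qn_def Q_def)
    qed
    also have "\<dots> = B" using E_rhon_powr[OF fJ] by (simp add: B_def)
    finally show ?thesis .
  qed
  have per_m: "measure_pmf.expectation (CB PU n N) (\<lambda>cb. measure_pmf.expectation (Kn L (cb m)) (\<lambda>z. log 2 (pmf (Pc L N cb) z / pmf Qn z))) \<le> B"
    if m: "m \<in> A" for m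
  proof -
    let ?R = "Pi_pmf (A - {m}) [] (\<lambda>_. U)"
    have fR: "finite (set_pmf ?R)" using fU fA by (intro finite_Pi) auto
    define X where "X f y z = ((pmf (Kn L y) z + (\<Sum>m'\<in>A - {m}. pmf (Kn L (f m')) z)) / N) / pmf Qn z" for f y z
    have "measure_pmf.expectation (CB PU n N) (\<lambda>cb. measure_pmf.expectation (Kn L (cb m)) (\<lambda>z. log 2 (pmf (Pc L N cb) z / pmf Qn z)))
      = measure_pmf.expectation U (\<lambda>y. measure_pmf.expectation ?R (\<lambda>f. measure_pmf.expectation (Kn L y) (\<lambda>z. log 2 (X f y z))))"
    proof -
      have "measure_pmf.expectation (CB PU n N) (\<lambda>cb. measure_pmf.expectation (Kn L (cb m)) (\<lambda>z. log 2 (pmf (Pc L N cb) z / pmf Qn z)))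
        = measure_pmf.expectation U (\<lambda>y. measure_pmf.expectation ?R (\<lambda>f. measure_pmf.expectation (Kn L ((f(m:=y)) m)) (\<lambda>z. log 2 (pmf (Pc L N (f(m:=y))) z / pmf Qn z))))"
        unfolding CB_def U_def[symmetric] A_def[symmetric]
        using m fU fA by (subst E_Pi_split[of A m]) auto
      also have "\<dots> = measure_pmf.expectation U (\<lambda>y. measure_pmf.expectation ?R (\<lambda>f. measure_pmf.expectation (Kn L y) (\<lambda>z. log 2 (X f y z))))"
      proof -
        have "pmf (Pc L N (f(m:=y))) z = (pmf (Kn L y) z + (\<Sum>m'\<in>A - {m}. pmf (Kn L (f m')) z)) / N" for f y z
        proof -
          have "(\<Sum>m'\<in>A. pmf (Kn L ((f(m:=y)) m')) z) = pmf (Kn L ((f(m:=y)) m)) z + (\<Sum>m'\<in>A - {m}. pmf (Kn L ((f(m:=y)) m')) z)"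
            using m fA by (simp add: sum.remove)
          also have "(\<Sum>m'\<in>A - {m}. pmf (Kn L ((f(m:=y)) m')) z) = (\<Sum>m'\<in>A - {m}. pmf (Kn L (f m')) z)"
            by (intro sum.cong) auto
          finally show ?thesis by (simp add: pmfPc)
        qed
        then show ?thesis by (simp add: X_def)
      qed
      finally show ?thesis .
    qed
    also have "\<dots> = measure_pmf.expectation U (\<lambda>y. measure_pmf.expectation (Kn L y) (\<lambda>z. measure_pmf.expectation ?R (\<lambda>f. log 2 (X f y z))))"
      by (rule arg_cong[where f="measure_pmf.expectation U"], rule ext, rule E_swap[OF fR fKn])
    also have "\<dots> \<le> measure_pmf.expectation U (\<lambda>y. measure_pmf.expectation (Kn L y) (\<lambda>z. C * (pmf (Kn L y) z / pmf Qn z) powr t))"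
    proof (intro E_mono fU fKn)
      fix y z assume y: "y \<in> set_pmf U" and z: "z \<in> set_pmf (Kn L y)"
      have lz: "length z = n" using len_Kn[OF z] lenU[OF y] by simp
      have q: "pmf Qn z > 0" using Qnpos[OF lz] .
      have a: "pmf (Kn L y) z > 0" using z by (simp add: pmf_positive)
      have "measure_pmf.expectation ?R (\<lambda>f. log 2 (X f y z)) \<le> log 2 (measure_pmf.expectation ?R (\<lambda>f. X f y z))"
      proof (rule jensen_log[OF fR])
        fix f
        have "0 \<le> (\<Sum>m'\<in>A - {m}. pmf (Kn L (f m')) z)" by (intro sum_nonneg) auto
        then show "X f y z > 0" using a q N by (simp add: X_def)
      qed
      also have "measure_pmf.expectation ?R (\<lambda>f. X f y z) = ((pmf (Kn L y) z + (N - 1) * pmf Qn z) / N) / pmf Qn z"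
      proof -
        have "measure_pmf.expectation ?R (\<lambda>f. X f y z) = (pmf (Kn L y) z + measure_pmf.expectation ?R (\<lambda>f. \<Sum>m'\<in>A - {m}. pmf (Kn L (f m')) z)) / (N * pmf Qn z)"
          unfolding X_def by (subst E_affine[OF fR, symmetric]) (simp add: divide_divide_eq_left)
        also have "measure_pmf.expectation ?R (\<lambda>f. \<Sum>m'\<in>A - {m}. pmf (Kn L (f m')) z) = (\<Sum>m'\<in>A - {m}. pmf Qn z)"
          using fR fA by (simp add: E_sumI E_Pi_comp[where G="\<lambda>u. pmf (Kn L u) z"] EU_pmf)
        also have "\<dots> = (N - 1) * pmf Qn z" using m fA by (simp add: A_def)
        finally show ?thesis by (simp add: divide_divide_eq_left)
      qed
      also have "log 2 (((pmf (Kn L y) z + (N - 1) * pmf Qn z) / N) / pmf Qn z) \<le> log 2 (1 + (pmf (Kn L y) z / pmf Qn z) / N)"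
      proof -
        have e: "((pmf (Kn L y) z + (N - 1) * pmf Qn z) / N) / pmf Qn z = (pmf (Kn L y) z / pmf Qn z) / N + (N - 1) / N"
          using q N by (simp add: field_simps)
        have "(N - 1) / N \<le> (1::real)" using N by simp
        moreover have "0 < (pmf (Kn L y) z / pmf Qn z) / N + (N - 1) / N"
          using a q N by (intro add_pos_nonneg) auto
        ultimately show ?thesis unfolding e by (subst log_le_cancel_iff) auto
      qed
      also have "\<dots> \<le> ((pmf (Kn L y) z / pmf Qn z) / N) powr t / (t * ln 2)"
        using a q t by (intro log1p_bound) auto
      also have "\<dots> = C * (pmf (Kn L y) z / pmf Qn z) powr t"
      proof -
        have "((pmf (Kn L y) z / pmf Qn z) / N) powr t = (pmf (Kn L y) z / pmf Qn z) powr t / real N powr t"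
          using a q by (simp add: powr_divide powr_mult)
        then show ?thesis by (simp add: C_def powr_minus field_simps)
      qed
      finally show "measure_pmf.expectation ?R (\<lambda>f. log 2 (X f y z)) \<le> C * (pmf (Kn L y) z / pmf Qn z) powr t" .
    qed
    also have "\<dots> \<le> B" by (rule final)
    finally show ?thesis .
  qed
  have "measure_pmf.expectation (CB PU n N) (\<lambda>cb. kl_div (Pc L N cb) (iid_list (bind_pmf PU L) n)) =
     (\<Sum>m\<in>A. measure_pmf.expectation (CB PU n N) (\<lambda>cb. measure_pmf.expectation (Kn L (cb m)) (\<lambda>z. log 2 (pmf (Pc L N cb) z / pmf Qn z)))) / N"
    unfolding Qn_def[symmetric] Q_def[symmetric] klE using fCB by (simp add: E_sumI Q_def Qn_def)
  also have "\<dots> \<le> (\<Sum>m\<in>A. B) / N"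
    using per_m by (intro divide_right_mono sum_mono) auto
  also have "\<dots> = B" using N by (simp add: A_def)
  finally show ?thesis by (simp add: B_def C_def)
qed



lemma kl_nonneg:
  assumes fin: "finite (set_pmf P)" and pos: "\<And>a. a \<in> set_pmf P \<Longrightarrow> pmf Q a > 0"
  shows "kl_div P Q \<ge> 0"
proof -
  let ?S = "set_pmf P"
  have "- kl_div P Q = (\<Sum>a\<in>?S. pmf P a * log 2 (pmf Q a / pmf P a))"
    unfolding kl_div_def
  proof (simp add: sum_negf[symmetric], intro sum.cong refl)
    fix a assume "a \<in> ?S"
    then have "pmf P a > 0" "pmf Q a > 0" using pos by (auto simp: pmf_positive)
    then show "- (pmf P a * log 2 (pmf P a / pmf Q a)) = pmf P a * log 2 (pmf Q a / pmf P a)"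
      by (simp add: log_divide algebra_simps)
  qed
  also have "\<dots> \<le> (\<Sum>a\<in>?S. pmf P a * ((pmf Q a / pmf P a - 1) / ln 2))"
  proof (intro sum_mono mult_left_mono)
    fix a assume "a \<in> ?S"
    then have "pmf Q a / pmf P a > 0" using pos by (auto simp: pmf_positive)
    then have "ln (pmf Q a / pmf P a) \<le> pmf Q a / pmf P a - 1" by (rule ln_le_minus_one)
    then show "log 2 (pmf Q a / pmf P a) \<le> (pmf Q a / pmf P a - 1) / ln 2" by (simp add: log_def divide_right_mono)
  qed auto
  also have "\<dots> = ((\<Sum>a\<in>?S. pmf Q a) - (\<Sum>a\<in>?S. pmf P a)) / ln 2"
  proof -
    have "\<And>a. a \<in> ?S \<Longrightarrow> pmf P a * ((pmf Q a / pmf P a - 1) / ln 2) = (pmf Q a - pmf P a) / ln 2"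
      by (simp add: field_simps set_pmf_iff)
    then show ?thesis by (simp add: sum_divide_distrib[symmetric] sum_subtractf)
  qed
  also have "\<dots> \<le> 0"
  proof -
    have "(\<Sum>a\<in>?S. pmf Q a) = measure_pmf.prob Q ?S" using fin by (simp add: measure_measure_pmf_finite)
    also have "\<dots> \<le> 1" by simp
    finally show ?thesis using fin by (simp add: sum_pmf_eq_1 divide_nonpos_pos)
  qed
  finally show ?thesis by simp
qed

lemma finite_Vch: "finite (set_pmf (Vch QS (W :: 'x \<Rightarrow> 's \<Rightarrow> ('y::finite \<times> 'z::finite) pmf) xf u))"
  by (rule finite_subset[of _ UNIV]) auto

lemma finite_pmf_finite_type: "finite (set_pmf (p :: ('a::finite) pmf))"
  by (rule finite_subset[of _ UNIV]) auto

lemma link_err: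
  fixes W :: "'x \<Rightarrow> 's \<Rightarrow> ('y::finite \<times> 'z::finite) pmf"
  assumes N: "N > 0" and len: "\<And>m. m < N \<Longrightarrow> length (cb m) = n"
  shows "err_prob QS W n N (enc xf cb) g =
     (\<Sum>m<N. measure_pmf.prob (Kn (\<lambda>u. map_pmf fst (Vch QS W xf u)) (cb m)) {ys. g ys \<noteq> m}) / N"
proof -
  let ?V = "Vch QS W xf"
  have fV: "\<And>us. finite (set_pmf (prod_pmf_list (map ?V us)))"
    by (rule finite_set_prod_pmf_list) (auto simp: finite_Vch)
  have "err_prob QS W n N (enc xf cb) g =
    measure_pmf.prob (map_pmf (\<lambda>(m,ss,ys,zs). (m,ys,zs)) (code_exp QS W n N (enc xf cb))) {(m,ys,zs). g ys \<noteq> m}"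
    unfolding err_prob_def by (simp add: vimage_def case_prod_unfold)
  also have "\<dots> = measure_pmf.prob (bind_pmf (pmf_of_set {0..<N}) (\<lambda>m. map_pmf (\<lambda>yz. (m, map fst yz, map snd yz)) (prod_pmf_list (map ?V (cb m))))) {(m,ys,zs). g ys \<noteq> m}"
    by (simp only: code_red[OF N len])
  also have "\<dots> = measure_pmf.expectation (pmf_of_set {0..<N}) (\<lambda>m. measure_pmf.prob (map_pmf (\<lambda>yz. (m, map fst yz, map snd yz)) (prod_pmf_list (map ?V (cb m)))) {(m,ys,zs). g ys \<noteq> m})"
    using N fV by (intro prob_bind) auto
  also have "\<dots> = (\<Sum>m<N. measure_pmf.prob (Kn (\<lambda>u. map_pmf fst (Vch QS W xf u)) (cb m)) {ys. g ys \<noteq> m}) / N"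
  proof -
    have "measure_pmf.prob (map_pmf (\<lambda>yz. (m, map fst yz, map snd yz)) (prod_pmf_list (map ?V (cb m)))) {(m,ys,zs). g ys \<noteq> m}
       = measure_pmf.prob (Kn (\<lambda>u. map_pmf fst (Vch QS W xf u)) (cb m)) {ys. g ys \<noteq> m}" for m
    proof -
      have "Kn (\<lambda>u. map_pmf fst (Vch QS W xf u)) (cb m) = map_pmf (map fst) (prod_pmf_list (map ?V (cb m)))"
        by (simp add: Kn_def map_prod_pmf_list o_def)
      then show ?thesis by (simp add: vimage_def)
    qed
    then show ?thesis using N by (subst integral_pmf_of_set) (auto simp: atLeast0LessThan)
  qed
  finally show ?thesis .
qed

lemma link_warden:
  assumes N: "N > 0" and len: "\<And>m. m < N \<Longrightarrow> length (cb m) = n"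
  shows "warden_dist QS W n N (enc xf cb) = Pc (\<lambda>u. map_pmf snd (Vch QS W xf u)) N cb"
proof -
  have "warden_dist QS W n N (enc xf cb) = map_pmf (\<lambda>(m,ys,zs). zs) (map_pmf (\<lambda>(m,ss,ys,zs). (m,ys,zs)) (code_exp QS W n N (enc xf cb)))"
    unfolding warden_dist_def by (simp add: pmf.map_comp o_def case_prod_unfold)
  also have "\<dots> = Pc (\<lambda>u. map_pmf snd (Vch QS W xf u)) N cb"
    by (simp only: code_red[OF N len]) (simp add: Pc_def Kn_def map_bind_pmf pmf.map_comp o_def map_prod_pmf_list)
  finally show ?thesis .
qed

lemma aux_marg:
  "map_pmf (\<lambda>(s, u, x, y, z). (u, F (y, z))) (aux_joint QS W PU xf) = jt PU (\<lambda>u. map_pmf F (Vch QS W xf u))"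
proof -
  have "map_pmf (\<lambda>(s, u, x, y, z). (u, F (y, z))) (aux_joint QS W PU xf) =
     bind_pmf QS (\<lambda>s. bind_pmf PU (\<lambda>u. bind_pmf (W (xf u s) s) (\<lambda>yz. return_pmf (u, F yz))))"
    unfolding aux_joint_def by (simp add: map_bind_pmf)
  also have "\<dots> = bind_pmf PU (\<lambda>u. bind_pmf QS (\<lambda>s. bind_pmf (W (xf u s) s) (\<lambda>yz. return_pmf (u, F yz))))"
    by (rule bind_commute_pmf)
  also have "\<dots> = jt PU (\<lambda>u. map_pmf F (Vch QS W xf u))"
    unfolding jt_def Vch_def by (simp add: map_pmf_def bind_assoc_pmf bind_return_pmf)
  finally show ?thesis .
qed

lemma aux_z:
  "map_pmf (\<lambda>(s, u, x, y, z). z) (aux_joint QS W PU xf) = bind_pmf PU (\<lambda>u. map_pmf snd (Vch QS W xf u))"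
proof -
  have "map_pmf (\<lambda>(s, u, x, y, z). z) (aux_joint QS W PU xf) = map_pmf snd (map_pmf (\<lambda>(s, u, x, y, z). (u, snd (y, z))) (aux_joint QS W PU xf))"
    by (simp add: pmf.map_comp o_def case_prod_unfold)
  also have "\<dots> = bind_pmf PU (\<lambda>u. map_pmf snd (Vch QS W xf u))"
    by (simp only: aux_marg jt_snd)
  finally show ?thesis .
qed



lemma prob_le_card: "finite S \<Longrightarrow> measure_pmf.prob M S \<le> real (card S)"
proof -
  assume f: "finite S"
  have "measure_pmf.prob M S = (\<Sum>a\<in>S. pmf M a)" using f by (simp add: measure_measure_pmf_finite)
  also have "\<dots> \<le> (\<Sum>a\<in>S. 1)" by (intro sum_mono) (simp add: pmf_le_1)
  finally show ?thesis by simp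
qed

lemma err_lower:
  fixes W :: "'x \<Rightarrow> 's \<Rightarrow> ('y::finite \<times> 'z) pmf"
  assumes N: "N > 0"
  shows "err_prob QS W n N f g \<ge> 1 - real (CARD('y) ^ n) / N"
proof -
  define Ln where "Ln = {ys :: 'y list. set ys \<subseteq> UNIV \<and> length ys = n}"
  have fLn: "finite Ln" unfolding Ln_def by (rule finite_lists_length_eq) simp
  have cLn: "card Ln = CARD('y) ^ n" unfolding Ln_def by (rule card_lists_length_eq) simp
  define \<pi> where "\<pi> = (\<lambda>(m :: nat, ss :: 's list, ys :: 'y list, zs :: 'z list). (m, ys))"
  define K where "K m = map_pmf \<pi> (bind_pmf (iid_list QS n) (\<lambda>ss.
     bind_pmf (prod_pmf_list (map (\<lambda>i. W (f i m (take (Suc i) ss)) (ss ! i)) [0..<n])) (\<lambda>yz.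
     return_pmf (m, ss, map fst yz, map snd yz))))" for m
  have setK: "set_pmf (K m) \<subseteq> {m} \<times> Ln" for m
    unfolding K_def \<pi>_def Ln_def by (auto dest!: length_prod_pmf_list)
  have fK: "finite (set_pmf (K m))" for m using setK[of m] fLn by (meson finite_SigmaI finite.emptyI finite.insertI finite_subset)
  have e: "map_pmf \<pi> (code_exp QS W n N f) = bind_pmf (pmf_of_set {0..<N}) K"
    unfolding code_exp_def K_def by (simp add: map_bind_pmf)
  have "measure_pmf.prob (code_exp QS W n N f) {(m, ss, ys, zs). g ys = m} =
        measure_pmf.prob (map_pmf \<pi> (code_exp QS W n N f)) {(m, ys). g ys = m}"
    by (simp add: \<pi>_def vimage_def case_prod_unfold)
  also have "\<dots> = measure_pmf.expectation (pmf_of_set {0..<N}) (\<lambda>m. measure_pmf.prob (K m) {(m, ys). g ys = m})"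
    unfolding e using N fK by (intro prob_bind) auto
  also have "\<dots> = (\<Sum>m\<in>{0..<N}. measure_pmf.prob (K m) {(m, ys). g ys = m}) / N"
    using N by (subst integral_pmf_of_set) auto
  also have "\<dots> \<le> (\<Sum>m\<in>{0..<N}. real (card {ys \<in> Ln. g ys = m})) / N"
  proof (intro divide_right_mono sum_mono)
    fix m
    have "measure_pmf.prob (K m) {(m, ys). g ys = m} = measure_pmf.prob (K m) ({(m, ys). g ys = m} \<inter> set_pmf (K m))"
      by (simp add: measure_Int_set_pmf)
    also have "\<dots> \<le> measure_pmf.prob (K m) ({m} \<times> {ys \<in> Ln. g ys = m})"
      using setK[of m] by (intro measure_pmf.finite_measure_mono) auto
    also have "\<dots> \<le> real (card ({m} \<times> {ys \<in> Ln. g ys = m}))"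
      using fLn by (intro prob_le_card) auto
    also have "\<dots> = real (card {ys \<in> Ln. g ys = m})" by (simp add: card_cartesian_product_singleton)
    finally show "measure_pmf.prob (K m) {(m, ys). g ys = m} \<le> real (card {ys \<in> Ln. g ys = m})" .
  qed auto
  also have "(\<Sum>m\<in>{0..<N}. real (card {ys \<in> Ln. g ys = m})) \<le> real (card Ln)"
  proof -
    have "(\<Sum>m\<in>{0..<N}. card {ys \<in> Ln. g ys = m}) = card (\<Union>m\<in>{0..<N}. {ys \<in> Ln. g ys = m})"
      using fLn by (intro card_UN_disjoint[symmetric]) auto
    also have "\<dots> \<le> card Ln" using fLn by (intro card_mono) auto
    finally show ?thesis by (simp flip: of_nat_sum)
  qed
  then have "(\<Sum>m\<in>{0..<N}. real (card {ys \<in> Ln. g ys = m})) / N \<le> real (card Ln) / N"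
    by (intro divide_right_mono) auto
  finally have c: "measure_pmf.prob (code_exp QS W n N f) {(m, ss, ys, zs). g ys = m} \<le> real (CARD('y) ^ n) / N"
    by (simp add: cLn)
  have "err_prob QS W n N f g = 1 - measure_pmf.prob (code_exp QS W n N f) {(m, ss, ys, zs). g ys = m}"
  proof -
    have "{(m, ss, ys, zs). g ys \<noteq> m} = UNIV - {(m :: nat, ss :: 's list, ys, zs :: 'z list). g ys = m}" by auto
    then show ?thesis unfolding err_prob_def using measure_pmf.prob_compl[of "{(m, ss, ys, zs). g ys = m}" "code_exp QS W n N f"] by simp
  qed
  then show ?thesis using c by simp
qed



lemma pow2n: "(2::real) powr (real n * a) = (2 powr a) ^ n"
proof -
  have "(2 powr a) ^ n = (2 powr a) powr real n" by (simp add: powr_realpow)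
  also have "\<dots> = 2 powr (real n * a)" by (simp add: powr_powr mult.commute)
  finally show ?thesis by simp
qed

lemma num_msgs_ge: "real (num_msgs n R) \<ge> 2 powr (real n * R)"
  unfolding num_msgs_def by (rule real_nat_ceiling_ge)

lemma num_msgs_pos: "num_msgs n R > 0"
proof -
  have "0 < 2 powr (real n * R)" by simp
  then show ?thesis using num_msgs_ge[of n R] by linarith
qed

lemma num_msgs_le: "real (num_msgs n R) - 1 \<le> 2 powr (real n * R)"
proof -
  have "0 < 2 powr (real n * R)" by simp
  then have "real (nat \<lceil>2 powr (real n * R)\<rceil>) = of_int \<lceil>2 powr (real n * R)\<rceil>" by simp
  moreover have "of_int \<lceil>2 powr (real n * R)\<rceil> \<le> 2 powr (real n * R) + 1" by (rule of_int_ceiling_le_add_one)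
  ultimately show ?thesis unfolding num_msgs_def by linarith
qed

lemma geo_lim: "0 \<le> q \<Longrightarrow> q < 1 \<Longrightarrow> (\<lambda>n. c * q ^ n :: real) \<longlonglongrightarrow> 0"
  by (intro tendsto_mult_right_zero LIMSEQ_power_zero) auto

lemma hh_nn: "finite (set_pmf J) \<Longrightarrow> hh J t \<ge> 0"
  by (simp add: hh_sum sum_nonneg)

lemma achievable_bdd:
  fixes W :: "'x \<Rightarrow> 's \<Rightarrow> ('y::finite \<times> 'z) pmf"
  assumes "covert_achievable QS W x0 R"
  shows "R \<le> log 2 (CARD('y)) + 1"
proof (rule ccontr)
  assume "\<not> ?thesis"
  then have R: "R > log 2 (CARD('y)) + 1" by simp
  from assms obtain f g where e: "(\<lambda>n. err_prob QS W n (num_msgs n R) (f n) (g n)) \<longlonglongrightarrow> 0"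
    unfolding covert_achievable_def by blast
  from order_tendstoD(2)[OF e, of "1/2"] obtain n0 where
    n0: "\<And>n. n \<ge> n0 \<Longrightarrow> err_prob QS W n (num_msgs n R) (f n) (g n) < 1/2"
    by (auto simp: eventually_sequentially)
  define n where "n = Suc n0"
  have lt: "err_prob QS W n (num_msgs n R) (f n) (g n) < 1/2" using n0 by (simp add: n_def)
  have c: "real CARD('y) > 0" by simp
  have "real (CARD('y) ^ n) / num_msgs n R \<le> 2 powr (real n * log 2 (CARD('y))) / 2 powr (real n * R)"
  proof -
    have "real (CARD('y) ^ n) = 2 powr (real n * log 2 (CARD('y)))"
      using c by (simp add: pow2n)
    moreover have "0 < 2 powr (real n * R)" by simp
    moreover have "0 < 2 powr (real n * R) * real (num_msgs n R)"
      using num_msgs_ge[of n R] \<open>0 < 2 powr (real n * R)\<close> by (intro mult_pos_pos) (auto simp: num_msgs_pos)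
    ultimately show ?thesis using num_msgs_ge[of n R] by (simp only:) (intro divide_left_mono, auto simp: mult.commute)
  qed
  also have "\<dots> = 2 powr (real n * (log 2 (CARD('y)) - R))"
    by (simp add: powr_diff[symmetric] right_diff_distrib)
  also have "\<dots> \<le> 2 powr (-1)"
  proof (intro powr_mono)
    have "real n * (log 2 (CARD('y)) - R) \<le> 1 * (log 2 (CARD('y)) - R)"
      using R by (intro mult_right_mono_neg) (auto simp: n_def)
    then have "real n * (log 2 (CARD('y)) - R) \<le> log 2 (CARD('y)) - R" by (simp only: mult_1)
    then show "real n * (log 2 (CARD('y)) - R) \<le> -1" using R by linarith
  qed auto
  finally have "real (CARD('y) ^ n) / num_msgs n R \<le> 1/2" by (simp add: powr_minus)
  with err_lower[where N="num_msgs n R" and QS=QS and W=W and n=n and f="f n" and g="g n", OF num_msgs_pos] lt show False by simp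
qed



lemma set_CB_len: "cb \<in> set_pmf (CB PU n N) \<Longrightarrow> m < N \<Longrightarrow> length (cb m) = n"
proof -
  assume cb: "cb \<in> set_pmf (CB PU n N)" and m: "m < N"
  have "cb \<in> PiE_dflt {0..<N} [] (set_pmf \<circ> (\<lambda>_. iid_list PU n))"
    using cb unfolding CB_def by (simp add: set_Pi_pmf)
  then have "cb m \<in> set_pmf (iid_list PU n)" using m by (auto simp: PiE_dflt_def)
  then show ?thesis by (rule set_iid)
qed

lemma b_bound:
  fixes t1 t2 \<gamma> R h1 h2 :: real
  assumes t1: "t1 > 0" and t2: "t2 > 0" and h1: "0 \<le> h1" "h1 < 2 powr (-t1 * \<gamma>)"
    and h2: "0 \<le> h2" "h2 < 2 powr (t2 * R)" and R\<gamma>: "R < \<gamma>"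
  shows "(\<lambda>n. (2 powr (real n * \<gamma>)) powr t1 * h1 ^ n + (real (num_msgs n R) - 1) / 2 powr (real n * \<gamma>)
     + real (num_msgs n R) powr (-t2) / (t2 * ln 2) * h2 ^ n) \<longlonglongrightarrow> 0"
proof -
  define q1 where "q1 = 2 powr (\<gamma> * t1) * h1"
  define q2 where "q2 = 2 powr (R - \<gamma>)"
  define q3 where "q3 = 2 powr (- t2 * R) * h2"
  define c where "c = 1 / (t2 * ln 2)"
  have q1: "0 \<le> q1" "q1 < 1"
  proof -
    show "0 \<le> q1" using h1 by (simp add: q1_def)
    have "q1 < 2 powr (\<gamma> * t1) * 2 powr (-t1 * \<gamma>)" unfolding q1_def using h1 by simp
    also have "\<dots> = 1" by (simp add: powr_add[symmetric])
    finally show "q1 < 1" .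
  qed
  have q2: "0 \<le> q2" "q2 < 1" using R\<gamma> powr_less_mono[of "R - \<gamma>" 0 2] by (auto simp: q2_def)
  have q3: "0 \<le> q3" "q3 < 1"
  proof -
    show "0 \<le> q3" using h2 by (simp add: q3_def)
    have "q3 < 2 powr (- t2 * R) * 2 powr (t2 * R)" unfolding q3_def using h2 by simp
    also have "\<dots> = 1" by (simp add: powr_add[symmetric])
    finally show "q3 < 1" .
  qed
  have le: "(2 powr (real n * \<gamma>)) powr t1 * h1 ^ n + (real (num_msgs n R) - 1) / 2 powr (real n * \<gamma>)
     + real (num_msgs n R) powr (-t2) / (t2 * ln 2) * h2 ^ n \<le> q1 ^ n + q2 ^ n + c * q3 ^ n" for n
  proof -
    have a: "(2 powr (real n * \<gamma>)) powr t1 * h1 ^ n = q1 ^ n"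
      by (simp add: powr_powr q1_def power_mult_distrib mult_ac pow2n[symmetric])
    have b: "(real (num_msgs n R) - 1) / 2 powr (real n * \<gamma>) \<le> q2 ^ n"
    proof -
      have "(real (num_msgs n R) - 1) / 2 powr (real n * \<gamma>) \<le> 2 powr (real n * R) / 2 powr (real n * \<gamma>)"
        by (intro divide_right_mono num_msgs_le) auto
      also have "\<dots> = q2 ^ n" by (simp add: q2_def pow2n[symmetric] powr_diff[symmetric] right_diff_distrib)
      finally show ?thesis .
    qed
    have c: "real (num_msgs n R) powr (-t2) / (t2 * ln 2) * h2 ^ n \<le> c * q3 ^ n"
    proof -
      have "real (num_msgs n R) powr (-t2) \<le> (2 powr (real n * R)) powr (-t2)"
        using t2 num_msgs_ge[of n R] by (intro powr_mono2') auto
      also have "\<dots> = (2 powr (- t2 * R)) ^ n" by (simp add: powr_powr pow2n[symmetric] mult_ac)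
      finally have "real (num_msgs n R) powr (-t2) * h2 ^ n \<le> (2 powr (- t2 * R)) ^ n * h2 ^ n"
        using h2 by (intro mult_right_mono) auto
      then have "real (num_msgs n R) powr (-t2) * h2 ^ n / (t2 * ln 2) \<le> (2 powr (- t2 * R)) ^ n * h2 ^ n / (t2 * ln 2)"
        using t2 by (intro divide_right_mono) auto
      then show ?thesis by (simp add: c_def q3_def power_mult_distrib field_simps)
    qed
    show ?thesis using a b c by linarith
  qed
  have lim: "(\<lambda>n. q1 ^ n + q2 ^ n + c * q3 ^ n) \<longlonglongrightarrow> 0"
    using geo_lim[OF q1, of 1] geo_lim[OF q2, of 1] geo_lim[OF q3, of c]
    by (auto intro!: tendsto_add_zero)
  have nn: "0 \<le> (2 powr (real n * \<gamma>)) powr t1 * h1 ^ n + (real (num_msgs n R) - 1) / 2 powr (real n * \<gamma>)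
     + real (num_msgs n R) powr (-t2) / (t2 * ln 2) * h2 ^ n" for n
  proof -
    have "real (num_msgs n R) \<ge> 1" using num_msgs_pos[of n R] by linarith
    then show ?thesis using h1 h2 t2 by (intro add_nonneg_nonneg mult_nonneg_nonneg divide_nonneg_nonneg) auto
  qed
  show ?thesis
    by (rule tendsto_sandwich[OF _ _ tendsto_const lim]) (use nn le in \<open>simp_all only: always_eventually eventually_True\<close>)
qed



lemma achievable_main:
  fixes QS :: "'s::finite pmf" and W :: "'x::finite \<Rightarrow> 's \<Rightarrow> ('y::finite \<times> 'z::finite) pmf" and x0 :: 'x
  assumes full: "set_pmf (Q0 QS W x0) = UNIV"
    and fPU: "finite (set_pmf PU)"
    and Qz: "bind_pmf PU (\<lambda>u. map_pmf snd (Vch QS W xf u)) = Q0 QS W x0"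
    and lo: "mut_inf (jt PU (\<lambda>u. map_pmf snd (Vch QS W xf u))) < R"
    and hi: "R < mut_inf (jt PU (\<lambda>u. map_pmf fst (Vch QS W xf u)))"
  shows "covert_achievable QS W x0 R"
proof -
  define VY where "VY u = map_pmf fst (Vch QS W xf u)" for u
  define VZ where "VZ u = map_pmf snd (Vch QS W xf u)" for u
  define JY where "JY = jt PU VY"
  define JZ where "JZ = jt PU VZ"
  define Q where "Q = Q0 QS W x0"
  have fVY: "\<And>u. finite (set_pmf (VY u))" by (rule finite_pmf_finite_type)
  have fVZ: "\<And>u. finite (set_pmf (VZ u))" by (rule finite_pmf_finite_type)
  have fJY: "finite (set_pmf JY)" unfolding JY_def using fPU fVY by (rule fin_jt)
  have fJZ: "finite (set_pmf JZ)" unfolding JZ_def using fPU fVZ by (rule fin_jt)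
  have QzV: "bind_pmf PU VZ = Q" using Qz by (simp add: VZ_def[abs_def] Q_def)
  have Qpos: "\<And>z. pmf Q z > 0" using full by (simp add: Q_def pmf_positive)
  have Qpos': "\<And>z. pmf (bind_pmf PU VZ) z > 0" using Qpos QzV by simp
  define \<gamma> where "\<gamma> = (R + mut_inf JY) / 2"
  have \<gamma>: "R < \<gamma>" "\<gamma> < mut_inf JY" using hi by (auto simp: \<gamma>_def JY_def VY_def[abs_def])
  obtain t1 where t1: "t1 > 0" "hh JY (-t1) < 2 powr (-t1 * \<gamma>)"
    using chern_down_J[OF fJY \<gamma>(2)] by blast
  obtain t2 where t2: "t2 > 0" "t2 \<le> 1" "hh JZ t2 < 2 powr (t2 * R)"
    using chern_up_J[OF fJZ, of R] lo by (auto simp: JZ_def VZ_def[abs_def])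
  define Nn where "Nn n = num_msgs n R" for n
  define T where "T n = 2 powr (real n * \<gamma>)" for n
  define b where "b n = T n powr t1 * hh JY (-t1) ^ n + (real (Nn n) - 1) / T n
     + real (Nn n) powr (-t2) / (t2 * ln 2) * hh JZ t2 ^ n" for n
  define F where "F n cb = errc JY VY (T n) (Nn n) cb + kl_div (Pc VZ (Nn n) cb) (iid_list Q n)" for n cb
  have Npos: "\<And>n. Nn n > 0" by (simp add: Nn_def num_msgs_pos)
  have ex: "\<exists>cb. cb \<in> set_pmf (CB PU n (Nn n)) \<and> F n cb \<le> b n" for n
  proof -
    have fCB: "finite (set_pmf (CB PU n (Nn n)))" unfolding CB_def using fPU
      by (intro finite_Pi finite_iid) auto
    have "measure_pmf.expectation (CB PU n (Nn n)) (F n) =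
      measure_pmf.expectation (CB PU n (Nn n)) (errc JY VY (T n) (Nn n)) +
      measure_pmf.expectation (CB PU n (Nn n)) (\<lambda>cb. kl_div (Pc VZ (Nn n) cb) (iid_list (bind_pmf PU VZ) n))"
      unfolding F_def QzV using fCB by (rule E_add)
    also have "\<dots> \<le> (measure_pmf.prob (iid_list JY n) {l. rhon JY l \<le> T n} + (real (Nn n) - 1) / T n) +
        real (Nn n) powr (-t2) / (t2 * ln 2) * hh JZ t2 ^ n"
      unfolding JY_def JZ_def
      by (intro add_mono E_err E_KL fPU fVY fVZ Npos Qpos' t2) (simp add: T_def)
    also have "\<dots> \<le> b n"
      unfolding b_def using prob_rhon_le[OF fJY, of "T n" t1 n] t1 by (simp add: T_def)
    finally have "measure_pmf.expectation (CB PU n (Nn n)) (F n) \<le> b n" .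
    with exists_le_E[OF fCB, of "F n"] show ?thesis by force
  qed
  then obtain cbs where cbs: "\<And>n. cbs n \<in> set_pmf (CB PU n (Nn n))" "\<And>n. F n (cbs n) \<le> b n"
    by metis
  have len: "\<And>n m. m < Nn n \<Longrightarrow> length (cbs n m) = n" using cbs(1) set_CB_len by blast
  define f where "f n = enc xf (cbs n)" for n
  define g where "g n = dec JY (T n) (Nn n) (cbs n)" for n
  have err_eq: "err_prob QS W n (Nn n) (f n) (g n) = errc JY VY (T n) (Nn n) (cbs n)" for n
    unfolding f_def g_def errc_def using link_err[where N="Nn n" and cb="cbs n" and n=n and QS=QS and W=W and xf=xf and g="g n", OF Npos len]
    by (simp add: VY_def[abs_def] g_def)
  have kl_eq: "warden_dist QS W n (Nn n) (f n) = Pc VZ (Nn n) (cbs n)" for n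
    unfolding f_def VZ_def using link_warden[where N="Nn n" and cb="cbs n" and n=n and QS=QS and W=W and xf=xf, OF Npos len] by simp
  have err_nn: "errc JY VY (T n) (Nn n) (cbs n) \<ge> 0" for n
    unfolding errc_def by (intro divide_nonneg_nonneg sum_nonneg) auto
  have kl_nn: "kl_div (Pc VZ (Nn n) (cbs n)) (iid_list Q n) \<ge> 0" for n
  proof (rule kl_nonneg)
    show "finite (set_pmf (Pc VZ (Nn n) (cbs n)))" unfolding Pc_def using Npos[of n]
      by (auto intro!: fin_Kn fVZ)
    fix z assume "z \<in> set_pmf (Pc VZ (Nn n) (cbs n))"
    then obtain m where m: "m < Nn n" "z \<in> set_pmf (Kn VZ (cbs n m))"
      unfolding Pc_def using Npos[of n] by auto
    have "length z = n" using len_Kn[OF m(2)] len[OF m(1)] by simp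
    then show "pmf (iid_list Q n) z > 0" using Qpos by (intro pmf_iid_pos)
  qed
  have blim: "b \<longlonglongrightarrow> 0"
    unfolding b_def[abs_def] T_def Nn_def
    using b_bound[OF t1(1) t2(1) hh_nn[OF fJY] t1(2) hh_nn[OF fJZ] t2(3) \<gamma>(1)] .
  have e1: "(\<lambda>n. err_prob QS W n (num_msgs n R) (f n) (g n)) \<longlonglongrightarrow> 0"
  proof (rule tendsto_sandwich[OF _ _ tendsto_const blim])
    show "\<forall>\<^sub>F n in sequentially. 0 \<le> err_prob QS W n (num_msgs n R) (f n) (g n)"
      using err_nn err_eq by (simp add: Nn_def)
    show "\<forall>\<^sub>F n in sequentially. err_prob QS W n (num_msgs n R) (f n) (g n) \<le> b n"
    proof (intro always_eventually allI)
      fix n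
      have "F n (cbs n) \<le> b n" by (rule cbs(2))
      then show "err_prob QS W n (num_msgs n R) (f n) (g n) \<le> b n"
        using err_eq[of n] kl_nn[of n] unfolding F_def Nn_def by linarith
    qed
  qed
  have e2: "(\<lambda>n. kl_div (warden_dist QS W n (num_msgs n R) (f n)) (iid_list (Q0 QS W x0) n)) \<longlonglongrightarrow> 0"
  proof (rule tendsto_sandwich[OF _ _ tendsto_const blim])
    show "\<forall>\<^sub>F n in sequentially. 0 \<le> kl_div (warden_dist QS W n (num_msgs n R) (f n)) (iid_list (Q0 QS W x0) n)"
      using kl_nn kl_eq by (simp add: Nn_def Q_def)
    show "\<forall>\<^sub>F n in sequentially. kl_div (warden_dist QS W n (num_msgs n R) (f n)) (iid_list (Q0 QS W x0) n) \<le> b n"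
    proof (intro always_eventually allI)
      fix n
      have "F n (cbs n) \<le> b n" by (rule cbs(2))
      then show "kl_div (warden_dist QS W n (num_msgs n R) (f n)) (iid_list (Q0 QS W x0) n) \<le> b n"
        using kl_eq[of n] err_nn[of n] unfolding F_def Nn_def Q_def by simp
    qed
  qed
  show ?thesis unfolding covert_achievable_def using e1 e2 by blast
qed



theorem theorem8:
  fixes QS :: "'s::finite pmf"
    and W :: "'x::finite \<Rightarrow> 's \<Rightarrow> ('y::finite \<times> 'z::finite) pmf"
    and x0 :: 'x
  assumes "set_pmf (Q0 QS W x0) = UNIV"
  shows "\<forall>R \<in> rate_set QS W x0. R \<le> covert_capacity QS W x0"
proof
  fix R assume "R \<in> rate_set QS W x0"
  then obtain P where P: "P \<in> D_set QS W x0"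
    and RI: "R \<le> mut_inf (map_pmf (\<lambda>(s, u, x, y, z). (u, y)) P)"
    unfolding rate_set_def by blast
  from P obtain PU xf where sPU: "set_pmf PU \<subseteq> {0..<CARD('x) + 1}"
    and Pdef: "P = aux_joint QS W PU xf"
    and Pz: "map_pmf (\<lambda>(s, u, x, y, z). z) P = Q0 QS W x0"
    and gap: "mut_inf (map_pmf (\<lambda>(s, u, x, y, z). (u, y)) P) > mut_inf (map_pmf (\<lambda>(s, u, x, y, z). (u, z)) P)"
    unfolding D_set_def by blast
  have eY: "map_pmf (\<lambda>(s, u, x, y, z). (u, y)) P = jt PU (\<lambda>u. map_pmf fst (Vch QS W xf u))"
    using aux_marg[of fst QS W PU xf] unfolding Pdef by simp
  have eZ: "map_pmf (\<lambda>(s, u, x, y, z). (u, z)) P = jt PU (\<lambda>u. map_pmf snd (Vch QS W xf u))"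
    using aux_marg[of snd QS W PU xf] unfolding Pdef by simp
  have Qz: "bind_pmf PU (\<lambda>u. map_pmf snd (Vch QS W xf u)) = Q0 QS W x0"
    using Pz aux_z[of QS W PU xf] unfolding Pdef by simp
  have fPU: "finite (set_pmf PU)" using sPU by (rule finite_subset) simp
  let ?S = "{R. covert_achievable QS W x0 R}"
  have bdd: "bdd_above ?S"
    by (rule bdd_aboveI[of _ "log 2 (CARD('y)) + 1"]) (auto intro: achievable_bdd)
  have "mut_inf (jt PU (\<lambda>u. map_pmf fst (Vch QS W xf u))) \<le> Sup ?S"
  proof (rule dense_le_bounded)
    show "mut_inf (jt PU (\<lambda>u. map_pmf snd (Vch QS W xf u))) < mut_inf (jt PU (\<lambda>u. map_pmf fst (Vch QS W xf u)))"
      using gap eY eZ by simp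
    fix w assume w: "mut_inf (jt PU (\<lambda>u. map_pmf snd (Vch QS W xf u))) < w"
      "w < mut_inf (jt PU (\<lambda>u. map_pmf fst (Vch QS W xf u)))"
    have "covert_achievable QS W x0 w"
      by (rule achievable_main[OF assms fPU Qz w])
    then show "w \<le> Sup ?S" using bdd by (intro cSup_upper) auto
  qed
  then show "R \<le> covert_capacity QS W x0"
    using RI eY unfolding covert_capacity_def by simp
qed


end
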